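(* Let $d_1,d_2\in\mathbb{Z}$ with $d_1>0$ and $d_2<d_1$. Then for each $\delta>0$ there exists $f\in\mathcal{E}_{d_1}$ such that $$\int_{\mathbb{S}^1}|\dot f-\dot g|\ge(2\pi-\delta)(d_1-d_2)\quad\text{for all } g\in\mathcal{E}_{d_2}.$$
   Context: $W^{1,1}(\mathbb{S}^1;\mathbb{S}^1)=\{f\in W^{1,1}(\mathbb{S}^1;\mathbb{R}^2):|f|=1\}$ (such maps are continuous); $\dot f$ is the derivative with respect to arclength; $\mathcal{E}_d=\{f\in W^{1,1}(\mathbb{S}^1;\mathbb{S}^1):\deg f=d\}$. *)

theory Defs
  imports "HOL-Complex_Analysis.Complex_Analysis"
begin

text \<open>The circle S^1 is parametrized by arclength t in [0, 2*pi] (t maps to exp(i t)),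
  and R^2 is identified with the complex plane.  A map f in W^{1,1}(S^1;S^1) is represented
  by a function f :: real => complex on [0,2*pi] together with its arclength derivative fd:
  fd is (absolutely) integrable on [0,2*pi], f is its indefinite integral (so f is
  absolutely continuous, the W^{1,1} condition in one dimension), f closes up
  (f 0 = f (2*pi)), and |f| = 1.\<close>

definition W11_circle :: "(real \<Rightarrow> complex) \<Rightarrow> (real \<Rightarrow> complex) \<Rightarrow> bool" where
  "W11_circle f fd \<longleftrightarrow>
     fd absolutely_integrable_on {0..2*pi} \<and>
     (\<forall>t\<in>{0..2*pi}. f t = f 0 + integral {0..t} fd) \<and>
     f (2*pi) = f 0 \<and>
     (\<forall>t\<in>{0..2*pi}. norm (f t) = 1)"

definition circle_deg :: "(real \<Rightarrow> complex) \<Rightarrow> complex" where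
  "circle_deg f = winding_number (\<lambda>u. f (2*pi*u)) 0"

end

theory Submission
  imports Defs
begin

lemma LG_aux:
  fixes E V :: "real \<Rightarrow> real"
  assumes "\<eta> > 0"
    and loc: "\<And>s t. a \<le> s \<Longrightarrow> s \<le> t \<Longrightarrow> t \<le> b \<Longrightarrow> t - s \<le> \<eta> \<Longrightarrow> \<bar>E t - E s\<bar> \<le> V t - V s"
  shows "a \<le> s \<Longrightarrow> s \<le> t \<Longrightarrow> t \<le> b \<Longrightarrow> t - s \<le> real m * \<eta> \<Longrightarrow> \<bar>E t - E s\<bar> \<le> V t - V s"
proof (induction m arbitrary: s)
  case 0
  then show ?case by simp
next
  case (Suc m)
  show ?case
  proof (cases "t - s \<le> \<eta>")
    case True
    then show ?thesis using loc Suc.prems by auto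
  next
    case False
    define s' where "s' = s + \<eta>"
    have "t - s' \<le> real m * \<eta>" using Suc.prems(4) unfolding s'_def by (simp add: algebra_simps)
    then have h1: "\<bar>E t - E s'\<bar> \<le> V t - V s'"
      using Suc.IH[of s'] Suc.prems False \<open>\<eta>>0\<close> unfolding s'_def by auto
    have h2: "\<bar>E s' - E s\<bar> \<le> V s' - V s"
      using loc[of s s'] Suc.prems False \<open>\<eta>>0\<close> unfolding s'_def by auto
    show ?thesis using h1 h2 by linarith
  qed
qed

lemma LG:
  fixes E V :: "real \<Rightarrow> real"
  assumes "\<eta> > 0" "a \<le> b"
    and loc: "\<And>s t. a \<le> s \<Longrightarrow> s \<le> t \<Longrightarrow> t \<le> b \<Longrightarrow> t - s \<le> \<eta> \<Longrightarrow> \<bar>E t - E s\<bar> \<le> V t - V s"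
  shows "\<bar>E b - E a\<bar> \<le> V b - V a"
proof -
  obtain m :: nat where "(b - a) / \<eta> \<le> real m" using real_arch_simple by blast
  then have "b - a \<le> real m * \<eta>" using \<open>\<eta>>0\<close> by (simp add: divide_le_eq)
  then show ?thesis using LG_aux[where E=E and V=V and \<eta>=\<eta> and a=a and b=b and s=a and t=b and m=m] assms loc by auto
qed

lemma AC_cont:
  fixes F F' :: "real \<Rightarrow> 'a::banach"
  assumes "F' integrable_on {a..b}" "\<And>t. t \<in> {a..b} \<Longrightarrow> F t = F a + integral {a..t} F'"
  shows "continuous_on {a..b} F"
proof -
  have "continuous_on {a..b} (\<lambda>t. F a + integral {a..t} F')"
    by (intro continuous_intros indefinite_integral_continuous_1 assms)
  then show ?thesis by (rule continuous_on_eq) (metis assms(2))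
qed

lemma abs_int_cont_prod:
  fixes K F' :: "real \<Rightarrow> real"
  assumes "continuous_on {a..b} K" "F' absolutely_integrable_on {a..b}"
  shows "(\<lambda>t. K t * F' t) absolutely_integrable_on {a..b}"
proof (rule absolutely_integrable_bounded_measurable_product_real)
  show "K \<in> borel_measurable (lebesgue_on {a..b})"
    using assms(1) by (intro continuous_imp_measurable_on_sets_lebesgue) auto
  show "bounded (K ` {a..b})"
    using assms(1) by (intro compact_imp_bounded compact_continuous_image) auto
qed (use assms in auto)

lemma chain_AC:
  fixes F F' G G' :: "real \<Rightarrow> real"
  assumes ab: "a \<le> b" and int: "F' absolutely_integrable_on {a..b}"
    and FF: "\<And>t. t \<in> {a..b} \<Longrightarrow> F t = F a + integral {a..t} F'"
    and GD: "\<And>x. (G has_real_derivative G' x) (at x)" and cG': "continuous_on UNIV G'"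
  shows "((\<lambda>t. G' (F t) * F' t) has_integral (G (F b) - G (F a))) {a..b}"
proof -
  let ?h = "\<lambda>t. G' (F t) * F' t"
  have intF: "F' integrable_on {a..b}" using int by (simp add: absolutely_integrable_on_def)
  have contF: "continuous_on {a..b} F" using AC_cont[OF intF FF] .
  have hint: "?h absolutely_integrable_on {a..b}"
    by (rule abs_int_cont_prod) (use contF cG' int in \<open>auto intro: continuous_on_compose2[OF cG']\<close>)
  then have hI: "?h integrable_on {a..b}" by (simp add: absolutely_integrable_on_def)
  have aI: "(\<lambda>t. \<bar>F' t\<bar>) integrable_on {a..b}"
    using int by (simp add: absolutely_integrable_on_def)
  obtain R where R: "\<And>t. t \<in> {a..b} \<Longrightarrow> \<bar>F t\<bar> \<le> R"
    using compact_imp_bounded[OF compact_continuous_image[OF contF compact_Icc]]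
    unfolding bounded_iff by (metis image_eqI real_norm_def)
  have ucG: "uniformly_continuous_on {-R..R} G'"
    by (intro compact_uniformly_continuous continuous_on_subset[OF cG']) auto
  have ucF: "uniformly_continuous_on {a..b} F"
    by (intro compact_uniformly_continuous contF) auto
  define E where "E t = G (F t) - integral {a..t} ?h" for t
  have main: "\<bar>E b - E a\<bar> \<le> e * integral {a..b} (\<lambda>t. \<bar>F' t\<bar>)" if "e > 0" for e
  proof -
    obtain d where d: "d > 0" and dG: "\<And>x y. x \<in> {-R..R} \<Longrightarrow> y \<in> {-R..R} \<Longrightarrow> \<bar>y - x\<bar> < d \<Longrightarrow> \<bar>G' y - G' x\<bar> < e"
      using ucG \<open>e>0\<close> unfolding uniformly_continuous_on_def dist_real_def by metis
    obtain \<eta> where eta: "\<eta> > 0" and dF: "\<And>x y. x \<in> {a..b} \<Longrightarrow> y \<in> {a..b} \<Longrightarrow> \<bar>y - x\<bar> < \<eta> \<Longrightarrow> \<bar>F y - F x\<bar> < d/2"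
      using ucF \<open>d>0\<close> unfolding uniformly_continuous_on_def dist_real_def
      by (metis half_gt_zero)
    define V where "V t = e * integral {a..t} (\<lambda>s. \<bar>F' s\<bar>)" for t
    have "\<bar>E b - E a\<bar> \<le> V b - V a"
    proof (rule LG[of "\<eta>/2"])
      fix s t assume st: "a \<le> s" "s \<le> t" "t \<le> b" "t - s \<le> \<eta>/2"
      have hst: "?h integrable_on {s..t}" using integrable_subinterval_real[OF hI] st by auto
      have Fst: "F' integrable_on {s..t}" using integrable_subinterval_real[OF intF] st by auto
      have ast: "(\<lambda>t. \<bar>F' t\<bar>) integrable_on {s..t}" using integrable_subinterval_real[OF aI] st by auto
      have c1: "integral {a..t} ?h = integral {a..s} ?h + integral {s..t} ?h"
        using sym[OF Henstock_Kurzweil_Integration.integral_combine[OF st(1) st(2) integrable_subinterval_real[OF hI, of a t]]] st by auto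
      have c2: "integral {a..t} F' = integral {a..s} F' + integral {s..t} F'"
        using sym[OF Henstock_Kurzweil_Integration.integral_combine[OF st(1) st(2) integrable_subinterval_real[OF intF, of a t]]] st by auto
      have c3: "integral {a..t} (\<lambda>t. \<bar>F' t\<bar>) = integral {a..s} (\<lambda>t. \<bar>F' t\<bar>) + integral {s..t} (\<lambda>t. \<bar>F' t\<bar>)"
        using sym[OF Henstock_Kurzweil_Integration.integral_combine[OF st(1) st(2) integrable_subinterval_real[OF aI, of a t]]] st by auto
      have FtFs: "F t - F s = integral {s..t} F'" using FF[of t] FF[of s] c2 st by auto
      obtain \<xi> where xi: "\<xi> \<in> closed_segment (F s) (F t)" and mv: "G (F t) - G (F s) = G' \<xi> * (F t - F s)"
      proof (cases "F s \<le> F t")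
        case True
        obtain x where "x \<in> {F s..F t}" "G (F t) - G (F s) = G' x * (F t - F s)"
          using mvt_very_simple[OF True, of G "\<lambda>x h. G' x * h"] GD
          by (metis has_field_derivative_imp_has_derivative has_derivative_at_withinI mult.commute)
        then show ?thesis using that True by (auto simp: closed_segment_eq_real_ivl)
      next
        case False
        obtain x where "x \<in> {F t..F s}" "G (F s) - G (F t) = G' x * (F s - F t)"
          using mvt_very_simple[of "F t" "F s" G "\<lambda>x h. G' x * h"] GD False
          by (metis has_field_derivative_imp_has_derivative has_derivative_at_withinI mult.commute linear)
        then show ?thesis using that False by (auto simp: closed_segment_eq_real_ivl algebra_simps)
      qed
      have xiR: "\<xi> \<in> {-R..R}" using xi R[of s] R[of t] st
        by (auto simp: closed_segment_eq_real_ivl split: if_splits)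
      have "E t - E s = G' \<xi> * integral {s..t} F' - integral {s..t} ?h"
        unfolding E_def using c1 mv FtFs by simp
      also have "\<dots> = integral {s..t} (\<lambda>r. G' \<xi> * F' r) - integral {s..t} ?h"
        by (simp only: Henstock_Kurzweil_Integration.integral_mult_right)
      also have "\<dots> = integral {s..t} (\<lambda>r. G' \<xi> * F' r - ?h r)"
        by (rule integral_diff[symmetric]) (use hst Fst integrable_on_mult_right in auto)
      also have "\<dots> = integral {s..t} (\<lambda>r. (G' \<xi> - G' (F r)) * F' r)"
        by (simp add: algebra_simps)
      finally have Est: "E t - E s = integral {s..t} (\<lambda>r. (G' \<xi> - G' (F r)) * F' r)" .
      have bnd: "\<bar>(G' \<xi> - G' (F r)) * F' r\<bar> \<le> e * \<bar>F' r\<bar>" if r: "r \<in> {s..t}" for r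
      proof -
        have rab: "r \<in> {a..b}" using r st by auto
        have "\<bar>F r - F s\<bar> < d/2" using dF[of s r] r st eta by auto
        moreover have "\<bar>F t - F s\<bar> < d/2" using dF[of s t] st eta by auto
        moreover have "\<bar>\<xi> - F s\<bar> \<le> \<bar>F t - F s\<bar>" using xi
          by (auto simp: closed_segment_eq_real_ivl split: if_splits)
        ultimately have "\<bar>F r - \<xi>\<bar> < d" by linarith
        then have "\<bar>G' (F r) - G' \<xi>\<bar> < e" using dG[OF xiR, of "F r"] R[OF rab] by (auto simp: abs_le_iff)
        then show ?thesis by (simp add: abs_mult mult_right_mono abs_minus_commute)
      qed
      have feq: "(\<lambda>r. (G' \<xi> - G' (F r)) * F' r) = (\<lambda>r. G' \<xi> * F' r - ?h r)"
        by (auto simp: algebra_simps)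
      have i1: "(\<lambda>r. (G' \<xi> - G' (F r)) * F' r) integrable_on {s..t}"
        unfolding feq by (intro integrable_diff integrable_on_mult_right Fst hst)
      have i2: "(\<lambda>r. e * \<bar>F' r\<bar>) integrable_on {s..t}"
        by (intro integrable_on_mult_right ast)
      have "\<bar>E t - E s\<bar> \<le> integral {s..t} (\<lambda>r. e * \<bar>F' r\<bar>)"
        unfolding Est using integral_norm_bound_integral[OF i1 i2] bnd by auto
      also have "\<dots> = V t - V s" unfolding V_def using c3 by (simp add: algebra_simps)
      finally show "\<bar>E t - E s\<bar> \<le> V t - V s" .
    qed (use eta ab in auto)
    then show ?thesis unfolding V_def by simp
  qed
  have "E b = E a"
  proof (rule ccontr)
    assume ne: "E b \<noteq> E a"
    define I where "I = integral {a..b} (\<lambda>t. \<bar>F' t\<bar>)"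
    have I0: "I \<ge> 0" unfolding I_def by (rule integral_nonneg[OF aI]) auto
    define e where "e = \<bar>E b - E a\<bar> / (2 * (I + 1))"
    have e0: "e > 0" unfolding e_def using ne I0 by auto
    have "\<bar>E b - E a\<bar> \<le> e * I" using main[OF e0] unfolding I_def .
    also have "\<dots> < \<bar>E b - E a\<bar>" unfolding e_def using ne I0
      by (simp add: field_simps add_nonneg_pos)
    finally show False by simp
  qed
  then have "integral {a..b} ?h = G (F b) - G (F a)" unfolding E_def by simp
  then show ?thesis using hI by (metis has_integral_integral)
qed

definition ACr :: "real \<Rightarrow> real \<Rightarrow> (real \<Rightarrow> real) \<Rightarrow> (real \<Rightarrow> real) \<Rightarrow> bool" where
  "ACr a b F F' \<longleftrightarrow> F' absolutely_integrable_on {a..b} \<and> (\<forall>t\<in>{a..b}. F t = F a + integral {a..t} F')"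

lemma ACr_int: "ACr a b F F' \<Longrightarrow> F' integrable_on {a..b}"
  by (simp add: ACr_def absolutely_integrable_on_def)

lemma ACr_abs: "ACr a b F F' \<Longrightarrow> F' absolutely_integrable_on {a..b}"
  by (simp add: ACr_def)

lemma ACr_eqn: "ACr a b F F' \<Longrightarrow> t \<in> {a..b} \<Longrightarrow> F t = F a + integral {a..t} F'"
  unfolding ACr_def by blast

lemma ACr_cont: "ACr a b F F' \<Longrightarrow> continuous_on {a..b} F"
  by (rule AC_cont[of F']) (blast intro: ACr_int ACr_eqn)+

lemma ACr_diffI:
  assumes "ACr a b F F'" "a \<le> s" "s \<le> t" "t \<le> b"
  shows "F t - F s = integral {s..t} F'"
proof -
  have I: "F' integrable_on {a..t}" using ACr_int[OF assms(1)] assms by (auto intro: integrable_subinterval_real)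
  have "integral {a..s} F' + integral {s..t} F' = integral {a..t} F'"
    by (rule Henstock_Kurzweil_Integration.integral_combine[OF assms(2,3) I])
  moreover have "F t = F a + integral {a..t} F'" "F s = F a + integral {a..s} F'"
    using assms by (auto intro!: ACr_eqn)
  ultimately show ?thesis by simp
qed

lemma ACr_has_integral:
  assumes "ACr a b F F'" "a \<le> b"
  shows "(F' has_integral (F b - F a)) {a..b}"
  using ACr_diffI[OF assms(1) order_refl assms(2) order_refl] ACr_int[OF assms(1)]
  by (metis has_integral_integral)

lemma ACrI:
  assumes "F' absolutely_integrable_on {a..b}" "\<And>t. t \<in> {a..b} \<Longrightarrow> F t = F a + integral {a..t} F'"
  shows "ACr a b F F'"
  using assms unfolding ACr_def by blast

lemma ACr_eq:
  assumes "ACr a b F F'" "\<And>t. t \<in> {a..b} \<Longrightarrow> F t = H t" "\<And>t. t \<in> {a..b} \<Longrightarrow> F' t = H' t" "a \<le> b"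
  shows "ACr a b H H'"
proof (rule ACrI)
  show "H' absolutely_integrable_on {a..b}"
    using absolutely_integrable_spike[where f=F' and T="{a..b}" and S="{}" and g=H'] ACr_abs[OF assms(1)] assms(3) by auto
  fix t assume t: "t \<in> {a..b}"
  have "integral {a..t} F' = integral {a..t} H'"
    using assms(3) t by (intro integral_cong) auto
  moreover have "a \<in> {a..b}" using assms by auto
  ultimately show "H t = H a + integral {a..t} H'"
    using ACr_eqn[OF assms(1) t] assms(2)[OF t] assms(2)[of a] by auto
qed


lemma ACr_sub:
  assumes "ACr a b F F'" "a \<le> c" "c \<le> d" "d \<le> b"
  shows "ACr c d F F'"
proof (rule ACrI)
  show "F' absolutely_integrable_on {c..d}"
    using ACr_abs[OF assms(1)] assms by (meson absolutely_integrable_on_subinterval atLeastatMost_subset_iff order_refl)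
  fix t assume "t \<in> {c..d}"
  then show "F t = F c + integral {c..t} F'"
    using ACr_diffI[OF assms(1), of c t] assms by (auto simp: algebra_simps)
qed

lemma ACr_const: "ACr a b (\<lambda>t. c) (\<lambda>t. 0)"
  unfolding ACr_def by simp

lemma ACr_add:
  assumes "ACr a b F F'" "ACr a b H H'"
  shows "ACr a b (\<lambda>t. F t + H t) (\<lambda>t. F' t + H' t)"
proof (rule ACrI)
  show "(\<lambda>t. F' t + H' t) absolutely_integrable_on {a..b}"
    using ACr_abs[OF assms(1)] ACr_abs[OF assms(2)] by (intro set_integral_add(1))
  fix t assume t: "t \<in> {a..b}"
  have "integral {a..t} (\<lambda>t. F' t + H' t) = integral {a..t} F' + integral {a..t} H'"
    using ACr_int[OF assms(1)] ACr_int[OF assms(2)] t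
    by (intro integral_add) (auto intro: integrable_subinterval_real)
  then show "F t + H t = F a + H a + integral {a..t} (\<lambda>t. F' t + H' t)"
    using ACr_eqn[OF assms(1) t] ACr_eqn[OF assms(2) t] by simp
qed

lemma ACr_cmult:
  assumes "ACr a b F F'"
  shows "ACr a b (\<lambda>t. c * F t) (\<lambda>t. c * F' t)"
proof (rule ACrI)
  show "(\<lambda>t. c * F' t) absolutely_integrable_on {a..b}"
    using ACr_abs[OF assms(1)] by (intro set_integrable_mult_right)
  fix t assume t: "t \<in> {a..b}"
  show "c * F t = c * F a + integral {a..t} (\<lambda>t. c * F' t)"
    using ACr_eqn[OF assms(1) t] by (simp add: algebra_simps)
qed

lemma ACr_diff:
  assumes "ACr a b F F'" "ACr a b H H'"
  shows "ACr a b (\<lambda>t. F t - H t) (\<lambda>t. F' t - H' t)"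
  using ACr_add[OF assms(1) ACr_cmult[OF assms(2), of "-1"]] by simp

lemma ACr_chain:
  fixes G G' :: "real \<Rightarrow> real"
  assumes "ACr a b F F'" "\<And>x. (G has_real_derivative G' x) (at x)" "continuous_on UNIV G'"
  shows "ACr a b (\<lambda>t. G (F t)) (\<lambda>t. G' (F t) * F' t)"
proof (rule ACrI)
  show "(\<lambda>t. G' (F t) * F' t) absolutely_integrable_on {a..b}"
    using ACr_abs[OF assms(1)] ACr_cont[OF assms(1)]
    by (intro abs_int_cont_prod continuous_on_compose2[OF assms(3)]) auto
  fix t assume t: "t \<in> {a..b}"
  have A: "ACr a t F F'" using ACr_sub[OF assms(1), of a t] t by auto
  have "((\<lambda>t. G' (F t) * F' t) has_integral (G (F t) - G (F a))) {a..t}"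
  proof (rule chain_AC)
    show "F' absolutely_integrable_on {a..t}" using ACr_abs[OF A] .
    show "\<And>s. s \<in> {a..t} \<Longrightarrow> F s = F a + integral {a..s} F'" using ACr_eqn[OF A] by blast
  qed (use t assms in auto)
  then show "G (F t) = G (F a) + integral {a..t} (\<lambda>t. G' (F t) * F' t)"
    by (simp add: integral_unique)
qed

lemma ACr_square:
  assumes "ACr a b F F'"
  shows "ACr a b (\<lambda>t. (F t)^2) (\<lambda>t. 2 * F t * F' t)"
proof -
  have "ACr a b (\<lambda>t. (\<lambda>x. x^2) (F t)) (\<lambda>t. (\<lambda>x. 2 * x) (F t) * F' t)"
    by (rule ACr_chain[OF assms]) (auto intro!: derivative_eq_intros continuous_intros)
  then show ?thesis by simp
qed

lemma ACr_mult:
  assumes "ACr a b F F'" "ACr a b H H'" "a \<le> b"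
  shows "ACr a b (\<lambda>t. F t * H t) (\<lambda>t. F' t * H t + F t * H' t)"
proof -
  have "ACr a b (\<lambda>t. (1/4) * ((F t + H t)^2 - (F t - H t)^2))
     (\<lambda>t. (1/4) * (2 * (F t + H t) * (F' t + H' t) - 2 * (F t - H t) * (F' t - H' t)))"
    by (intro ACr_cmult ACr_diff ACr_square ACr_add ACr_diff assms)
  then show ?thesis by (rule ACr_eq) (auto simp: algebra_simps power2_eq_square assms(3))
qed

lemma AC_diff_gen:
  fixes F F' :: "real \<Rightarrow> 'a::banach"
  assumes "F' integrable_on {a..b}" "\<And>t. t \<in> {a..b} \<Longrightarrow> F t = F a + integral {a..t} F'"
    "a \<le> s" "s \<le> t" "t \<le> b"
  shows "F t - F s = integral {s..t} F'"
proof -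
  have I: "F' integrable_on {a..t}" using assms by (auto intro: integrable_subinterval_real)
  have c: "integral {a..s} F' + integral {s..t} F' = integral {a..t} F'"
    by (rule Henstock_Kurzweil_Integration.integral_combine[OF assms(3,4) I])
  have "F t = F a + integral {a..t} F'" "F s = F a + integral {a..s} F'"
    using assms(2)[of t] assms(2)[of s] assms(3-5) by auto
  then have "F t - F s = integral {a..t} F' - integral {a..s} F'" by simp
  then show ?thesis by (simp add: c[symmetric])
qed

lemma Im_cnj_mult: "Im (cnj u * v) = Re u * Im v - Im u * Re v"
  by simp

lemma lift_W11:
  fixes g gd :: "real \<Rightarrow> complex"
  assumes ab: "a \<le> b" and gdi: "gd absolutely_integrable_on {a..b}"
    and geq: "\<And>t. t \<in> {a..b} \<Longrightarrow> g t = g a + integral {a..t} gd"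
    and g1: "\<And>t. t \<in> {a..b} \<Longrightarrow> norm (g t) = 1"
  obtains \<psi> where "ACr a b \<psi> (\<lambda>t. Im (cnj (g t) * gd t))"
    "\<And>t. t \<in> {a..b} \<Longrightarrow> g t = exp (\<i> * of_real (\<psi> t))"
    "continuous_on {a..b} \<psi>"
proof -
  let ?D = "\<lambda>t. Im (cnj (g t) * gd t)"
  have gdI: "gd integrable_on {a..b}" using gdi by (simp add: absolutely_integrable_on_def)
  have ngI: "(\<lambda>t. norm (gd t)) integrable_on {a..b}" using gdi by (simp add: absolutely_integrable_on_def)
  have contg: "continuous_on {a..b} g" by (rule AC_cont[OF gdI geq])
  obtain \<Lambda> where contL: "continuous_on {a..b} \<Lambda>" and gL: "\<And>x. x \<in> {a..b} \<Longrightarrow> g x = exp (\<Lambda> x)"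
  proof (rule continuous_logarithm_on_contractible[OF contg])
    show "contractible {a..b}" by (simp add: convex_imp_contractible)
    show "\<And>z. z \<in> {a..b} \<Longrightarrow> g z \<noteq> 0" using g1 by fastforce
  qed blast
  define \<psi> where "\<psi> t = Im (\<Lambda> t)" for t
  have ReL: "Re (\<Lambda> t) = 0" if "t \<in> {a..b}" for t
    using g1[OF that] gL[OF that] by (simp add: norm_exp_eq_Re)
  have gpsi: "g t = exp (\<i> * of_real (\<psi> t))" if "t \<in> {a..b}" for t
  proof -
    have "\<Lambda> t = \<i> * of_real (\<psi> t)" using ReL[OF that] unfolding \<psi>_def
      by (simp add: complex_eq_iff)
    then show ?thesis using gL[OF that] by simp
  qed
  have contpsi: "continuous_on {a..b} \<psi>" unfolding \<psi>_def by (intro continuous_intros contL)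
  have Dabs: "?D absolutely_integrable_on {a..b}"
  proof -
    have r: "(\<lambda>t. Re (gd t)) absolutely_integrable_on {a..b}" "(\<lambda>t. Im (gd t)) absolutely_integrable_on {a..b}"
      using absolutely_integrable_linear[OF gdi bounded_linear_Re] absolutely_integrable_linear[OF gdi bounded_linear_Im]
      by (auto simp: o_def)
    have "(\<lambda>t. Re (g t) * Im (gd t) - Im (g t) * Re (gd t)) absolutely_integrable_on {a..b}"
      by (intro set_integral_diff(1) abs_int_cont_prod r continuous_intros contg)
    then show ?thesis by simp
  qed
  have DI: "?D integrable_on {a..b}" using Dabs by (simp add: absolutely_integrable_on_def)
  have ucg: "uniformly_continuous_on {a..b} g" by (intro compact_uniformly_continuous contg) auto
  have ucpsi: "uniformly_continuous_on {a..b} \<psi>" by (intro compact_uniformly_continuous contpsi) auto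
  have key: "\<psi> t = \<psi> a + integral {a..t} ?D" if t: "t \<in> {a..b}" for t
  proof -
    define E where "E x = \<psi> x - integral {a..x} ?D" for x
    have main: "\<bar>E t - E a\<bar> \<le> e * integral {a..t} (\<lambda>r. norm (gd r))" if "e > 0" for e
    proof -
      define e' where "e' = min (1/2) (e/4)"
      have e': "e' > 0" using \<open>e>0\<close> by (simp add: e'_def)
      obtain \<eta>1 where eta1: "\<eta>1 > 0" and d1: "\<And>x y. x \<in> {a..b} \<Longrightarrow> y \<in> {a..b} \<Longrightarrow> dist y x < \<eta>1 \<Longrightarrow> dist (g y) (g x) < e'"
        using ucg e' unfolding uniformly_continuous_on_def by metis
      obtain \<eta>2 where eta2: "\<eta>2 > 0" and d2: "\<And>x y. x \<in> {a..b} \<Longrightarrow> y \<in> {a..b} \<Longrightarrow> dist y x < \<eta>2 \<Longrightarrow> dist (\<psi> y) (\<psi> x) < pi"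
        using ucpsi pi_gt_zero unfolding uniformly_continuous_on_def by metis
      define \<eta> where "\<eta> = min \<eta>1 \<eta>2 / 2"
      have eta: "\<eta> > 0" using eta1 eta2 by (simp add: \<eta>_def)
      define V where "V x = e * integral {a..x} (\<lambda>r. norm (gd r))" for x
      have "\<bar>E t - E a\<bar> \<le> V t - V a"
      proof (rule LG[OF eta])
        fix s x assume sx: "a \<le> s" "s \<le> x" "x \<le> t" "x - s \<le> \<eta>"
        have sab: "s \<in> {a..b}" and xab: "x \<in> {a..b}" using sx t by auto
        have close: "\<bar>r - s\<bar> < \<eta>1" "\<bar>r - s\<bar> < \<eta>2" if "r \<in> {s..x}" for r
          using that sx eta1 eta2 unfolding \<eta>_def by auto
        have gI: "gd integrable_on {s..x}" using gdI sx t by (auto intro: integrable_subinterval_real)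
        have nI: "(\<lambda>r. norm (gd r)) integrable_on {s..x}" using ngI sx t by (auto intro: integrable_subinterval_real)
        have DIs: "?D integrable_on {s..x}" using DI sx t by (auto intro: integrable_subinterval_real)
        define J where "J = integral {s..x} (\<lambda>r. norm (gd r))"
        have gxs: "g x - g s = integral {s..x} gd"
          by (rule AC_diff_gen[OF gdI geq]) (use sx t in auto)
        have normgxs: "norm (g x - g s) \<le> J" unfolding gxs J_def
          by (rule integral_norm_bound_integral[OF gI nI]) auto
        define z where "z = cnj (g s) * (g x - g s)"
        have nz: "norm z = norm (g x - g s)" unfolding z_def using g1[OF sab] by (simp add: norm_mult)
        have nz2: "norm z < e'" using nz d1[OF sab xab] close[of x] sx by (auto simp: dist_norm)
        have gsgs: "cnj (g s) * g s = 1" using g1[OF sab]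
          using complex_norm_square[of "g s"] by (simp add: mult.commute)
        have ez: "exp (\<i> * of_real (\<psi> x - \<psi> s)) = 1 + z"
        proof -
          have "exp (\<i> * of_real (\<psi> x - \<psi> s)) = exp (\<i> * of_real (\<psi> x)) * cnj (exp (\<i> * of_real (\<psi> s)))"
            by (simp add: exp_diff exp_cnj algebra_simps divide_inverse flip: exp_minus)
          also have "\<dots> = g x * cnj (g s)" using gpsi[OF xab] gpsi[OF sab] by simp
          also have "\<dots> = 1 + z" unfolding z_def using gsgs by (simp add: algebra_simps)
          finally show ?thesis .
        qed
        have pr: "\<bar>\<psi> x - \<psi> s\<bar> < pi" using d2[OF sab xab] close[of x] sx by (auto simp: dist_real_def)
        have lnz: "Ln (1 + z) = \<i> * of_real (\<psi> x - \<psi> s)"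
          using pr by (subst ez[symmetric], subst Ln_exp) auto
        have "norm (Ln (1 + z) - z) \<le> norm z ^ 2 / (1 - norm z)"
          by (rule Ln_approx_linear) (use nz2 e' in \<open>auto simp: e'_def\<close>)
        also have "\<dots> \<le> norm z ^ 2 / (1/2)"
          using nz2 by (intro divide_left_mono) (auto simp: e'_def)
        also have "\<dots> = 2 * norm z ^ 2" by simp
        also have "\<dots> \<le> 2 * (e/4) * J"
        proof -
          have "norm z ^ 2 = norm z * norm z" by (simp add: power2_eq_square)
          also have "\<dots> \<le> (e/4) * J"
            using nz2 normgxs nz \<open>e>0\<close> by (intro mult_mono) (auto simp: e'_def)
          finally show ?thesis by simp
        qed
        finally have A1: "\<bar>(\<psi> x - \<psi> s) - Im z\<bar> \<le> (e/2) * J"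
          using abs_Im_le_cmod[of "Ln (1 + z) - z"] unfolding lnz by simp
        have Imz: "Im z = integral {s..x} (\<lambda>r. Im (cnj (g s) * gd r))"
        proof -
          have "z = integral {s..x} (\<lambda>r. cnj (g s) * gd r)" unfolding z_def gxs by simp
          then have "Im z = Im (integral {s..x} (\<lambda>r. cnj (g s) * gd r))" by simp
          also have "\<dots> = integral {s..x} (\<lambda>r. Im (cnj (g s) * gd r))"
            using integral_linear[OF integrable_on_mult_right[OF gI, of "cnj (g s)"] bounded_linear_Im]
            by (simp add: o_def)
          finally show ?thesis .
        qed
        have I2: "(\<lambda>r. Im (cnj (g s) * gd r)) integrable_on {s..x}"
          using integrable_linear[OF integrable_on_mult_right[OF gI, of "cnj (g s)"] bounded_linear_Im]
          by (simp add: o_def)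
        have A2: "\<bar>Im z - integral {s..x} ?D\<bar> \<le> (e/2) * J"
        proof -
          have "Im z - integral {s..x} ?D = integral {s..x} (\<lambda>r. Im (cnj (g s) * gd r) - ?D r)"
            unfolding Imz by (rule integral_diff[symmetric, OF I2 DIs])
          also have "\<bar>\<dots>\<bar> \<le> integral {s..x} (\<lambda>r. (e/2) * norm (gd r))"
            unfolding real_norm_def[symmetric]
          proof (rule integral_norm_bound_integral)
            show "(\<lambda>r. Im (cnj (g s) * gd r) - Im (cnj (g r) * gd r)) integrable_on {s..x}"
              by (rule integrable_diff[OF I2 DIs])
            show "(\<lambda>r. (e/2) * norm (gd r)) integrable_on {s..x}"
              using integrable_on_mult_right[OF nI, of "e/2"] by simp
            fix r assume r: "r \<in> {s..x}"
            have rab: "r \<in> {a..b}" using r sx t by auto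
            have "dist (g r) (g s) < e'" using d1[OF sab rab] close(1)[OF r] by (simp add: dist_real_def)
            then have "norm (g s - g r) < e/4" by (simp add: dist_norm e'_def norm_minus_commute)
            then have grs: "norm (g s - g r) \<le> e/2" using norm_ge_zero[of "g s - g r"] by linarith
            have "\<bar>Im (cnj (g s) * gd r) - Im (cnj (g r) * gd r)\<bar> = \<bar>Im ((cnj (g s) - cnj (g r)) * gd r)\<bar>"
              by (simp add: algebra_simps)
            also have "\<dots> \<le> norm ((cnj (g s) - cnj (g r)) * gd r)" by (rule abs_Im_le_cmod)
            also have "\<dots> = norm (g s - g r) * norm (gd r)"
              by (simp add: norm_mult flip: complex_cnj_diff)
            also have "\<dots> \<le> (e/2) * norm (gd r)" using grs by (intro mult_right_mono) auto
            finally show "norm (Im (cnj (g s) * gd r) - Im (cnj (g r) * gd r)) \<le> (e/2) * norm (gd r)" by simp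
          qed
          also have "\<dots> = (e/2) * J" unfolding J_def by simp
          finally show ?thesis .
        qed
        have Exs: "E x - E s = (\<psi> x - \<psi> s) - integral {s..x} ?D"
        proof -
          have "integral {a..s} ?D + integral {s..x} ?D = integral {a..x} ?D"
            by (rule Henstock_Kurzweil_Integration.integral_combine[OF sx(1,2)])
               (use DI sx t in \<open>auto intro: integrable_subinterval_real\<close>)
          then show ?thesis unfolding E_def by simp
        qed
        have Vxs: "V x - V s = e * J"
        proof -
          have "integral {a..s} (\<lambda>r. norm (gd r)) + J = integral {a..x} (\<lambda>r. norm (gd r))"
            unfolding J_def
            by (rule Henstock_Kurzweil_Integration.integral_combine[OF sx(1,2)])
               (use ngI sx t in \<open>auto intro: integrable_subinterval_real\<close>)
          then show ?thesis unfolding V_def by (metis add_diff_cancel_left' right_diff_distrib)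
        qed
        show "\<bar>E x - E s\<bar> \<le> V x - V s" unfolding Exs Vxs using A1 A2 by linarith
      qed (use t in auto)
      then show ?thesis unfolding V_def by simp
    qed
    have "E t = E a"
    proof (rule ccontr)
      assume ne: "E t \<noteq> E a"
      define I where "I = integral {a..t} (\<lambda>r. norm (gd r))"
      have I0: "I \<ge> 0" unfolding I_def
        by (rule integral_nonneg) (use ngI t in \<open>auto intro: integrable_subinterval_real\<close>)
      define e where "e = \<bar>E t - E a\<bar> / (2 * (I + 1))"
      have e0: "e > 0" unfolding e_def using ne I0 by auto
      have "\<bar>E t - E a\<bar> \<le> e * I" using main[OF e0] unfolding I_def .
      also have "\<dots> < \<bar>E t - E a\<bar>" unfolding e_def using ne I0
        by (simp add: field_simps add_nonneg_pos)
      finally show False by simp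
    qed
    then show ?thesis unfolding E_def by simp
  qed
  have "ACr a b \<psi> ?D" by (rule ACrI[OF Dabs key])
  then show ?thesis using that gpsi contpsi by blast
qed

lemma deg_lift:
  fixes g :: "real \<Rightarrow> complex" and \<psi> :: "real \<Rightarrow> real"
  assumes cont: "continuous_on {0..2*pi} \<psi>"
    and gpsi: "\<And>t. t \<in> {0..2*pi} \<Longrightarrow> g t = exp (\<i> * of_real (\<psi> t))"
  shows "circle_deg g = of_real ((\<psi> (2*pi) - \<psi> 0) / (2*pi))"
proof -
  define p where "p u = \<i> * of_real (\<psi> (2*pi*u))" for u
  have m: "u \<in> {0..1} \<Longrightarrow> 2*pi*u \<in> {0..2*pi}" for u by auto
  have cp: "continuous_on {0..1} (\<lambda>u. \<psi> (2*pi*u))"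
    by (rule continuous_on_compose2[OF cont]) (auto intro!: continuous_intros)
  have pp: "path p" unfolding path_def p_def by (intro continuous_intros cp)
  have pe: "path (exp \<circ> p)" unfolding path_def
    by (intro continuous_on_compose pp[unfolded path_def] continuous_on_exp continuous_on_id)
  have eq: "(exp \<circ> p) u = g (2*pi*u)" if "u \<in> {0..1}" for u
    using gpsi[OF m[OF that]] by (simp add: p_def)
  have pg: "path (\<lambda>u. g (2*pi*u))" unfolding path_def
    using pe[unfolded path_def] by (rule continuous_on_eq) (use eq in auto)
  have "winding_number (\<lambda>u. g (2*pi*u)) 0 = winding_number (exp \<circ> p) 0"
  proof (rule winding_number_nearby_paths_eq[OF pe pg])
    show "pathstart (\<lambda>u. g (2 * pi * u)) = pathstart (exp \<circ> p)"
      using eq[of 0] by (simp add: pathstart_def)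
    show "pathfinish (\<lambda>u. g (2 * pi * u)) = pathfinish (exp \<circ> p)"
      using eq[of 1] by (simp add: pathfinish_def)
    fix t :: real assume t: "t \<in> {0..1}"
    have "(exp \<circ> p) t \<noteq> 0" by simp
    then show "norm (g (2*pi*t) - (exp \<circ> p) t) < norm ((exp \<circ> p) t - 0)"
      using eq[OF t] by (metis diff_self diff_zero norm_eq_zero zero_less_norm_iff)
  qed
  also have "\<dots> = (pathfinish p - pathstart p) / (2 * of_real pi * \<i>)"
    by (rule winding_number_compose_exp[OF pp])
  also have "\<dots> = of_real ((\<psi> (2*pi) - \<psi> 0) / (2*pi))"
    by (simp add: p_def pathfinish_def pathstart_def field_simps)
  finally show ?thesis unfolding circle_deg_def .
qed

lemma ACr_Re:
  fixes g gd :: "real \<Rightarrow> complex"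
  assumes gdi: "gd absolutely_integrable_on {a..b}"
    and geq: "\<And>t. t \<in> {a..b} \<Longrightarrow> g t = g a + integral {a..t} gd"
  shows "ACr a b (\<lambda>t. Re (g t)) (\<lambda>t. Re (gd t))" "ACr a b (\<lambda>t. Im (g t)) (\<lambda>t. Im (gd t))"
proof -
  have gdI: "gd integrable_on {a..b}" using gdi by (simp add: absolutely_integrable_on_def)
  show "ACr a b (\<lambda>t. Re (g t)) (\<lambda>t. Re (gd t))"
  proof (rule ACrI)
    show "(\<lambda>t. Re (gd t)) absolutely_integrable_on {a..b}"
      using absolutely_integrable_linear[OF gdi bounded_linear_Re] by (simp add: o_def)
    fix t assume t: "t \<in> {a..b}"
    have "gd integrable_on {a..t}" using gdI t by (auto intro: integrable_subinterval_real)
    then show "Re (g t) = Re (g a) + integral {a..t} (\<lambda>t. Re (gd t))"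
      using geq[OF t] integral_linear[of gd "{a..t}" Re] bounded_linear_Re by (simp add: o_def)
  qed
  show "ACr a b (\<lambda>t. Im (g t)) (\<lambda>t. Im (gd t))"
  proof (rule ACrI)
    show "(\<lambda>t. Im (gd t)) absolutely_integrable_on {a..b}"
      using absolutely_integrable_linear[OF gdi bounded_linear_Im] by (simp add: o_def)
    fix t assume t: "t \<in> {a..b}"
    have "gd integrable_on {a..t}" using gdI t by (auto intro: integrable_subinterval_real)
    then show "Im (g t) = Im (g a) + integral {a..t} (\<lambda>t. Im (gd t))"
      using geq[OF t] integral_linear[of gd "{a..t}" Im] bounded_linear_Im by (simp add: o_def)
  qed
qed

lemma rho_zero:
  fixes g gd :: "real \<Rightarrow> complex"
  assumes ab: "a \<le> b" and gdi: "gd absolutely_integrable_on {a..b}"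
    and geq: "\<And>t. t \<in> {a..b} \<Longrightarrow> g t = g a + integral {a..t} gd"
    and g1: "\<And>t. t \<in> {a..b} \<Longrightarrow> norm (g t) = 1"
  shows "ACr a b (\<lambda>t. 0) (\<lambda>t. Re (cnj (g t) * gd t))"
proof -
  have "ACr a b (\<lambda>t. (1/2) * ((Re (g t))^2 + (Im (g t))^2))
     (\<lambda>t. (1/2) * (2 * Re (g t) * Re (gd t) + 2 * Im (g t) * Im (gd t)))"
    by (intro ACr_cmult ACr_add ACr_square ACr_Re[OF gdi geq])
  moreover have "(1/2) * ((Re (g t))^2 + (Im (g t))^2) = 1/2" if "t \<in> {a..b}" for t
    using g1[OF that] by (simp add: cmod_def)
  ultimately have A: "ACr a b (\<lambda>t. 1/2) (\<lambda>t. Re (cnj (g t) * gd t))"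
    by (rule ACr_eq) (auto simp: ab)
  show ?thesis
    using ACr_diff[OF A ACr_const[of a b "1/2"]] by simp
qed

lemma weak_zero:
  fixes K \<rho> :: "real \<Rightarrow> real"
  assumes ab: "a \<le> b" and A: "ACr a b (\<lambda>t. 0) \<rho>" and cK: "continuous_on {a..b} K"
  shows "integral {a..b} (\<lambda>t. K t * \<rho> t) = 0"
proof -
  let ?h = "\<lambda>t. K t * \<rho> t"
  have \<rho>I: "\<rho> integrable_on {a..b}" by (rule ACr_int[OF A])
  have aI: "(\<lambda>t. \<bar>\<rho> t\<bar>) integrable_on {a..b}" using ACr_abs[OF A] by (simp add: absolutely_integrable_on_def)
  have hI: "?h integrable_on {a..b}"
    using abs_int_cont_prod[OF cK ACr_abs[OF A]] by (simp add: absolutely_integrable_on_def)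
  have z: "integral {s..t} \<rho> = 0" if "a \<le> s" "s \<le> t" "t \<le> b" for s t
    using ACr_diffI[OF A that] by simp
  have uc: "uniformly_continuous_on {a..b} K" by (intro compact_uniformly_continuous cK) auto
  define E where "E t = integral {a..t} ?h" for t
  have main: "\<bar>E b - E a\<bar> \<le> e * integral {a..b} (\<lambda>t. \<bar>\<rho> t\<bar>)" if "e > 0" for e
  proof -
    obtain \<eta> where eta: "\<eta> > 0" and d: "\<And>x y. x \<in> {a..b} \<Longrightarrow> y \<in> {a..b} \<Longrightarrow> dist y x < \<eta> \<Longrightarrow> dist (K y) (K x) < e"
      using uc \<open>e>0\<close> unfolding uniformly_continuous_on_def by metis
    define V where "V t = e * integral {a..t} (\<lambda>s. \<bar>\<rho> s\<bar>)" for t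
    have "\<bar>E b - E a\<bar> \<le> V b - V a"
    proof (rule LG[of "\<eta>/2"])
      fix s t assume st: "a \<le> s" "s \<le> t" "t \<le> b" "t - s \<le> \<eta>/2"
      have hst: "?h integrable_on {s..t}" using hI st by (auto intro: integrable_subinterval_real)
      have rst: "\<rho> integrable_on {s..t}" using \<rho>I st by (auto intro: integrable_subinterval_real)
      have ast: "(\<lambda>t. \<bar>\<rho> t\<bar>) integrable_on {s..t}" using aI st by (auto intro: integrable_subinterval_real)
      have c1: "integral {a..s} ?h + integral {s..t} ?h = integral {a..t} ?h"
        by (rule Henstock_Kurzweil_Integration.integral_combine[OF st(1,2)]) (use hI st in \<open>auto intro: integrable_subinterval_real\<close>)
      have c3: "integral {a..s} (\<lambda>t. \<bar>\<rho> t\<bar>) + integral {s..t} (\<lambda>t. \<bar>\<rho> t\<bar>) = integral {a..t} (\<lambda>t. \<bar>\<rho> t\<bar>)"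
        by (rule Henstock_Kurzweil_Integration.integral_combine[OF st(1,2)]) (use aI st in \<open>auto intro: integrable_subinterval_real\<close>)
      have "integral {s..t} ?h = integral {s..t} (\<lambda>r. (K r - K s) * \<rho> r) + K s * integral {s..t} \<rho>"
      proof -
        have "integral {s..t} (\<lambda>r. (K r - K s) * \<rho> r) = integral {s..t} (\<lambda>r. ?h r - K s * \<rho> r)"
          by (simp add: algebra_simps)
        also have "\<dots> = integral {s..t} ?h - integral {s..t} (\<lambda>r. K s * \<rho> r)"
          by (rule integral_diff[OF hst integrable_on_mult_right[OF rst]])
        finally show ?thesis by simp
      qed
      also have "\<dots> = integral {s..t} (\<lambda>r. (K r - K s) * \<rho> r)" using z[OF st(1-3)] by simp
      finally have hst_eq: "integral {s..t} ?h = integral {s..t} (\<lambda>r. (K r - K s) * \<rho> r)" .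
      have i1: "(\<lambda>r. (K r - K s) * \<rho> r) integrable_on {s..t}"
      proof -
        have "(\<lambda>r. ?h r - K s * \<rho> r) integrable_on {s..t}"
          by (rule integrable_diff[OF hst integrable_on_mult_right[OF rst]])
        then show ?thesis by (simp add: algebra_simps)
      qed
      have "norm (integral {s..t} (\<lambda>r. (K r - K s) * \<rho> r)) \<le> integral {s..t} (\<lambda>r. e * \<bar>\<rho> r\<bar>)"
      proof (rule integral_norm_bound_integral[OF i1 integrable_on_mult_right[OF ast]])
        fix r assume r: "r \<in> {s..t}"
        have "dist (K r) (K s) < e" using d[of s r] r st eta by (auto simp: dist_real_def)
        then show "norm ((K r - K s) * \<rho> r) \<le> e * \<bar>\<rho> r\<bar>"
          by (auto simp: dist_real_def abs_mult intro!: mult_right_mono)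
      qed
      then have "\<bar>E t - E s\<bar> \<le> e * integral {s..t} (\<lambda>r. \<bar>\<rho> r\<bar>)"
        using c1 hst_eq unfolding E_def by (simp add: algebra_simps)
      also have "\<dots> = V t - V s" unfolding V_def using c3 by (metis add_diff_cancel_left' right_diff_distrib)
      finally show "\<bar>E t - E s\<bar> \<le> V t - V s" .
    qed (use eta ab in auto)
    then show ?thesis unfolding V_def by simp
  qed
  show ?thesis
  proof (rule ccontr)
    assume ne: "integral {a..b} ?h \<noteq> 0"
    then have ne': "E b \<noteq> E a" unfolding E_def by simp
    define I where "I = integral {a..b} (\<lambda>t. \<bar>\<rho> t\<bar>)"
    have I0: "I \<ge> 0" unfolding I_def by (rule integral_nonneg[OF aI]) auto
    define e where "e = \<bar>E b - E a\<bar> / (2 * (I + 1))"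
    have e0: "e > 0" unfolding e_def using ne' I0 by auto
    have "\<bar>E b - E a\<bar> \<le> e * I" using main[OF e0] unfolding I_def .
    also have "\<dots> < \<bar>E b - E a\<bar>" unfolding e_def using ne' I0
      by (simp add: field_simps add_nonneg_pos)
    finally show False by simp
  qed
qed

lemma Re_cnj_le: "Re (cnj W * Z) \<le> norm W * norm Z"
  by (metis complex_Re_le_cmod norm_mult complex_mod_cnj)

lemma ptwise:
  fixes f g gd :: complex and a P Q r s :: real
  assumes f1: "norm f = 1" and g1: "norm g = 1" and "0 \<le> P" "0 \<le> Q" "P + Q = 1" "0 \<le> r" "r \<le> 1" "\<bar>s\<bar> \<le> 1"
  shows "(1 - r) * (P * (Re (cnj f * g) * a - Im (cnj g * gd)) + Q * (a - Im (cnj f * gd))) + r * s * (Im (cnj f * g) * a - Re (cnj g * gd))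
          \<le> norm (\<i> * of_real a * f - gd)"
proof -
  define Z where "Z = \<i> * of_real a * f - gd"
  define W where "W = of_real ((1-r)*P) * (\<i> * g) + of_real ((1-r)*Q) * (\<i> * f) + of_real (r * s) * g"
  have nW: "norm W \<le> 1"
  proof -
    have "norm W \<le> norm (of_real ((1-r)*P) * (\<i> * g)) + norm (of_real ((1-r)*Q) * (\<i> * f)) + norm (of_real (r * s) * g)"
      unfolding W_def by (meson norm_triangle_le norm_triangle_ineq add_mono order_refl)
    also have "\<dots> = (1-r)*P + (1-r)*Q + r * \<bar>s\<bar>"
      using assms by (simp only: norm_mult norm_of_real norm_ii) (simp add: abs_mult)
    also have "\<dots> \<le> (1-r) + r" using assms
      by (metis add.commute distrib_left mult.right_neutral mult_left_mono  add_left_mono)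
    finally show ?thesis by simp
  qed
  have ff: "(Re f)^2 + (Im f)^2 = 1" using f1 by (simp add: cmod_def)
  have gg: "(Re g)^2 + (Im g)^2 = 1" using g1 by (simp add: cmod_def)
  have ff': "Im f * Im f = 1 - Re f * Re f" using ff by (simp add: power2_eq_square)
  have gg': "Im g * Im g = 1 - Re g * Re g" using gg by (simp add: power2_eq_square)
  have "Re (cnj W * Z) = (1 - r) * (P * (Re (cnj f * g) * a - Im (cnj g * gd)) + Q * (a - Im (cnj f * gd))) + r * s * (Im (cnj f * g) * a - Re (cnj g * gd))"
    unfolding W_def Z_def
    by (simp add: algebra_simps ff' gg')
  then have "(1 - r) * (P * (Re (cnj f * g) * a - Im (cnj g * gd)) + Q * (a - Im (cnj f * gd))) + r * s * (Im (cnj f * g) * a - Re (cnj g * gd)) = Re (cnj W * Z)" by simp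
  also have "\<dots> \<le> norm W * norm Z" by (rule Re_cnj_le)
  also have "\<dots> \<le> norm Z" using nW by (simp add: mult_left_le_one_le)
  finally show ?thesis unfolding Z_def .
qed

lemma Im_split:
  fixes f g gd :: complex
  assumes g1: "norm g = 1"
  shows "Im (cnj f * gd) = Im (cnj f * g) * Re (cnj g * gd) + Re (cnj f * g) * Im (cnj g * gd)"
proof -
  have gg: "(Re g)^2 + (Im g)^2 = 1" using g1 by (simp add: cmod_def)
  have "Im (cnj f * g) * Re (cnj g * gd) + Re (cnj f * g) * Im (cnj g * gd)
      = (Re f * Im gd - Im f * Re gd) * ((Re g)^2 + (Im g)^2)"
    by (simp add: algebra_simps power2_eq_square)
  then show ?thesis using gg by simp
qed

definition wfn :: "real \<Rightarrow> real" where "wfn z = (1 - cos z) / 2"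

lemma wfn_bounds: "0 \<le> wfn z" "wfn z \<le> 1"
  unfolding wfn_def using cos_le_one[of z] cos_ge_minus_one[of z] by auto

lemma sin_sq_wf: "(sin z)^2 = 4 * wfn z * (1 - wfn z)"
proof -
  have "sin z * sin z = 1 - cos z * cos z" using sin_cos_squared_add3[of z] by linarith
  then show ?thesis unfolding wfn_def by (simp add: field_simps power2_eq_square) (use sin_cos_squared_add3[of z] in linarith)
qed

lemma wfn_deriv: "(wfn has_real_derivative (sin z / 2)) (at z)"
  unfolding wfn_def by (auto intro!: derivative_eq_intros)

lemma wfn_periodic: "wfn (z + 2 * pi * of_int j) = wfn z"
  unfolding wfn_def by (simp add: cos_add)

fun mm :: "nat \<Rightarrow> real" where
  "mm 0 = 1"
| "mm (Suc M) = (2 * real M + 1) / (2 * real M + 2) * mm M"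

fun SS :: "nat \<Rightarrow> real \<Rightarrow> real" where
  "SS 0 z = 0"
| "SS (Suc M) z = ((2 * real M + 1) * SS M z - sin z * wfn z ^ M) / (2 * real M + 2)"

lemma mm_nonneg: "mm M \<ge> 0"
  by (induction M) auto

lemma frac_aux: "(a::real) > 0 \<Longrightarrow> b > 0 \<Longrightarrow> (a / b)^2 * (1 / a) = a / b^2"
  by (simp add: power2_eq_square field_simps)

lemma mm_sq: "(mm M)^2 \<le> 1 / (2 * real M + 1)"
proof (induction M)
  case 0
  then show ?case by simp
next
  case (Suc M)
  have "(mm (Suc M))^2 = ((2 * real M + 1) / (2 * real M + 2))^2 * (mm M)^2"
    by (simp add: field_simps power2_eq_square)
  also have "\<dots> \<le> ((2 * real M + 1) / (2 * real M + 2))^2 * (1 / (2 * real M + 1))"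
    by (intro mult_left_mono Suc.IH) auto
  also have "\<dots> = (2 * real M + 1) / (2 * real M + 2)^2"
    by (rule frac_aux) auto
  also have "\<dots> \<le> 1 / (2 * real (Suc M) + 1)"
  proof -
    have "(2 * real M + 1) * (2 * real M + 3) \<le> (2 * real M + 2)^2" by (simp add: power2_eq_square algebra_simps)
    then show ?thesis by (simp add: field_simps)
  qed
  finally show ?case .
qed

lemma sinw_deriv:
  "((\<lambda>z. sin z * wfn z ^ M) has_real_derivative ((2 * real M + 1) * wfn z ^ M - (2 * real M + 2) * wfn z ^ Suc M)) (at z)"
proof -
  have d: "((\<lambda>z. sin z * wfn z ^ M) has_real_derivative (cos z * wfn z ^ M + sin z * (real M * wfn z ^ (M - 1) * (sin z / 2)))) (at z)"
    by (auto intro!: derivative_eq_intros wfn_deriv simp: algebra_simps)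
  have c: "cos z = 1 - 2 * wfn z" unfolding wfn_def by (simp add: field_simps)
  have "sin z * (real M * wfn z ^ (M - 1) * (sin z / 2)) = real M * wfn z ^ (M - 1) * ((sin z)^2 / 2)"
    by (simp add: power2_eq_square)
  also have "\<dots> = real M * wfn z ^ (M - 1) * (2 * wfn z * (1 - wfn z))"
    by (simp add: sin_sq_wf)
  also have "\<dots> = 2 * real M * wfn z ^ M * (1 - wfn z)"
    by (cases M) (auto simp: algebra_simps)
  finally have e: "sin z * (real M * wfn z ^ (M - 1) * (sin z / 2)) = 2 * real M * wfn z ^ M * (1 - wfn z)" .
  show ?thesis using d unfolding e c by (simp add: algebra_simps)
qed

lemma SS_deriv: "(SS M has_real_derivative (wfn z ^ M - mm M)) (at z)"
proof (induction M arbitrary: z)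
  case 0
  then show ?case by simp
next
  case (Suc M)
  have "((\<lambda>z. ((2 * real M + 1) * SS M z - sin z * wfn z ^ M) / (2 * real M + 2)) has_real_derivative
      (((2 * real M + 1) * (wfn z ^ M - mm M) - ((2 * real M + 1) * wfn z ^ M - (2 * real M + 2) * wfn z ^ Suc M)) / (2 * real M + 2))) (at z)"
  proof -
    have A: "((\<lambda>z. (2 * real M + 1) * SS M z - sin z * wfn z ^ M) has_real_derivative
      ((2 * real M + 1) * (wfn z ^ M - mm M) - ((2 * real M + 1) * wfn z ^ M - (2 * real M + 2) * wfn z ^ Suc M))) (at z)"
      by (intro DERIV_diff DERIV_cmult Suc.IH sinw_deriv)
    show ?thesis using DERIV_cdivide[OF A, of "2 * real M + 2"] by simp
  qed
  moreover have "(((2 * real M + 1) * (wfn z ^ M - mm M) - ((2 * real M + 1) * wfn z ^ M - (2 * real M + 2) * wfn z ^ Suc M)) / (2 * real M + 2))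
      = wfn z ^ Suc M - mm (Suc M)"
    by (simp add: field_simps)
  ultimately show ?case by (simp add: fun_eq_iff)
qed

lemma SS_periodic: "SS M (z + 2 * pi * of_int j) = SS M z"
  by (induction M) (auto simp: wfn_periodic sin_add)

lemma bernoulli_aux: "0 \<le> w \<Longrightarrow> w \<le> (1::real) \<Longrightarrow> 1 - w ^ N \<le> real N * (1 - w)"
proof (induction N)
  case 0
  then show ?case by simp
next
  case (Suc N)
  have "1 - w ^ Suc N = (1 - w ^ N) + w ^ N * (1 - w)" by (simp add: algebra_simps)
  also have "\<dots> \<le> real N * (1 - w) + 1 * (1 - w)"
    using Suc by (intro add_mono mult_right_mono) (auto simp: power_le_one)
  finally show ?case by (simp add: algebra_simps)
qed

definition BB :: "nat \<Rightarrow> real \<Rightarrow> real" where "BB N z = - 2 * wfn z + 2 * wfn z ^ Suc N"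

lemma BB_deriv: "(BB N has_real_derivative ((- 2 + 2 * real (Suc N) * wfn z ^ N) * (sin z / 2))) (at z)"
proof -
  have d1: "((\<lambda>z. wfn z ^ Suc N) has_real_derivative (real (Suc N) * (sin z / 2 * wfn z ^ N))) (at z)"
    using DERIV_power[OF wfn_deriv[of z], of "Suc N"] unfolding diff_Suc_Suc diff_zero .
  have D: "((\<lambda>z. - 2 * wfn z + 2 * wfn z ^ Suc N) has_real_derivative (- 2 * (sin z / 2) + 2 * (real (Suc N) * (sin z / 2 * wfn z ^ N)))) (at z)"
    by (intro DERIV_add DERIV_cmult wfn_deriv d1)
  have eqBB: "BB N = (\<lambda>z. - 2 * wfn z + 2 * wfn z ^ Suc N)" by (simp add: fun_eq_iff BB_def)
  have V: "- 2 * (sin z / 2) + 2 * (real (Suc N) * (sin z / 2 * wfn z ^ N)) = (- 2 + 2 * real (Suc N) * wfn z ^ N) * (sin z / 2)"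
    by (simp add: algebra_simps)
  show ?thesis unfolding eqBB by (rule DERIV_cong[OF D V])
qed

lemma BB_lower: "- BB N z \<le> real N * (sin z)^2 / 2"
proof -
  have "- BB N z = 2 * wfn z * (1 - wfn z ^ N)" unfolding BB_def by (simp add: algebra_simps)
  also have "\<dots> \<le> 2 * wfn z * (real N * (1 - wfn z))"
    using wfn_bounds[of z] by (intro mult_left_mono bernoulli_aux) auto
  also have "\<dots> = real N * (sin z)^2 / 2" by (simp add: sin_sq_wf)
  finally show ?thesis .
qed

lemma BB_deriv_bound: "\<bar>(- 2 + 2 * real (Suc N) * wfn z ^ N) * (sin z / 2)\<bar> \<le> real N + 1"
proof -
  have w: "0 \<le> wfn z ^ N" "wfn z ^ N \<le> 1" using wfn_bounds[of z] by (auto simp: power_le_one)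
  have "\<bar>- 2 + 2 * real (Suc N) * wfn z ^ N\<bar> \<le> 2 * (real N + 1)"
  proof -
    define v where "v = wfn z ^ N"
    have h1: "real (Suc N) * v \<le> real (Suc N) * 1" using w unfolding v_def by (intro mult_left_mono) auto
    then have h1': "real (Suc N) * v \<le> real N + 1" by (simp add: algebra_simps)
    have h2: "0 \<le> real (Suc N) * v" using w unfolding v_def by simp
    define x where "x = real (Suc N) * v"
    have "\<bar>- 2 + 2 * x\<bar> \<le> 2 * (real N + 1)" using h1' h2 unfolding x_def[symmetric] by (auto simp: abs_le_iff)
    then show ?thesis unfolding v_def x_def by (simp add: algebra_simps)
  qed
  moreover have "\<bar>sin z / 2\<bar> \<le> 1/2" using abs_sin_le_one[of z] by simp
  ultimately have "\<bar>(- 2 + 2 * real (Suc N) * wfn z ^ N) * (sin z / 2)\<bar> \<le> 2 * (real N + 1) * (1/2)"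
    unfolding abs_mult by (intro mult_mono) auto
  then show ?thesis by simp
qed

definition phid :: "real \<Rightarrow> real \<Rightarrow> real \<Rightarrow> real \<Rightarrow> real" where
  "phid L h p t = (if t - h * of_int \<lfloor>t / h\<rfloor> < p * h then L else - L)"

lemma phid_meas: "phid L h p \<in> borel_measurable (lebesgue_on S)"
proof -
  have "phid L h p \<in> borel_measurable borel" unfolding phid_def by measurable
  then have "phid L h p \<in> lborel \<rightarrow>\<^sub>M borel" by (simp only: measurable_lborel2)
  then have "phid L h p \<in> borel_measurable lebesgue" by (rule measurable_completion)
  then show ?thesis by (rule measurable_restrict_space1)
qed


lemma phid_abs: "phid L h p absolutely_integrable_on {a..b}"
proof (rule measurable_bounded_by_integrable_imp_absolutely_integrable[where g="\<lambda>_. \<bar>L\<bar>"])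
  show "phid L h p \<in> borel_measurable (lebesgue_on {a..b})" by (rule phid_meas)
  show "{a..b} \<in> sets lebesgue" by simp
  show "(\<lambda>_. \<bar>L\<bar>) integrable_on {a..b}" by (rule integrable_continuous_real) (auto intro: continuous_intros)
  show "\<And>x. x \<in> {a..b} \<Longrightarrow> norm (phid L h p x) \<le> \<bar>L\<bar>" by (simp add: phid_def)
qed

lemma phid_up:
  assumes "h > 0" "p < 1" "real_of_int j * h \<le> t" "t < real_of_int j * h + p * h"
  shows "phid L h p t = L"
proof -
  have "p * h < h" using assms by simp
  then have "t < real_of_int j * h + h" using assms by linarith
  then have "real_of_int j \<le> t / h" "t / h < real_of_int j + 1"
    using assms by (auto simp: field_simps)
  then have "\<lfloor>t / h\<rfloor> = j" by (simp add: floor_eq_iff)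
  then show ?thesis using assms unfolding phid_def by (simp add: algebra_simps)
qed

lemma phid_down:
  assumes "h > 0" "real_of_int j * h + p * h \<le> t" "t < real_of_int j * h + h" "0 \<le> p"
  shows "phid L h p t = - L"
proof -
  have "0 \<le> p * h" using assms by simp
  then have "real_of_int j * h \<le> t" using assms by linarith
  then have "real_of_int j \<le> t / h" "t / h < real_of_int j + 1"
    using assms by (auto simp: field_simps)
  then have "\<lfloor>t / h\<rfloor> = j" by (simp add: floor_eq_iff)
  then show ?thesis using assms unfolding phid_def by (simp add: algebra_simps)
qed

lemma sum_pieces:
  fixes F :: "real \<Rightarrow> real"
  assumes h: "h > 0" and P: "\<And>j. j < n \<Longrightarrow> (F has_integral v) {real j * h .. real j * h + h}"
  shows "(F has_integral (real n * v)) {0 .. real n * h}"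
  using P
proof (induction n)
  case 0
  then show ?case by (simp add: has_integral_refl)
next
  case (Suc n)
  have A: "(F has_integral (real n * v)) {0 .. real n * h}" using Suc by auto
  have B: "(F has_integral v) {real n * h .. real n * h + h}" using Suc.prems by auto
  have "(F has_integral (real n * v + v)) {0 .. real n * h + h}"
    by (rule has_integral_combine[OF _ _ A B]) (use h in auto)
  then show ?case by (simp add: algebra_simps)
qed

lemma piece_phid:
  assumes h: "h > 0" and p: "0 \<le> p" "p < 1"
  shows "(phid L h p has_integral (L * (p * h) - L * ((1 - p) * h))) {real j * h .. real j * h + h}"
proof -
  let ?c = "real j * h + p * h"
  have up: "(phid L h p has_integral (L * (p * h))) {real j * h .. ?c}"
  proof (rule has_integral_spike_finite[where S="{?c}"])
    show "((\<lambda>_. L) has_integral (L * (p * h))) {real j * h .. ?c}"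
      using has_integral_const_real[of L "real j * h" ?c] h p by (simp add: mult_ac)
    fix x assume "x \<in> {real j * h .. ?c} - {?c}"
    then show "phid L h p x = L" using phid_up[of h p "int j" x] h p
      by auto
  qed auto
  have down: "(phid L h p has_integral (- L * ((1 - p) * h))) {?c .. real j * h + h}"
  proof (rule has_integral_spike_finite[where S="{real j * h + h}"])
    show "((\<lambda>_. - L) has_integral (- L * ((1 - p) * h))) {?c .. real j * h + h}"
      using has_integral_const_real[of "- L" ?c "real j * h + h"] h p by (simp add: algebra_simps mult_ac)
    fix x assume "x \<in> {?c .. real j * h + h} - {real j * h + h}"
    then show "phid L h p x = - L" using phid_down[of h "int j" p x] h p by auto
  qed auto
  have "(phid L h p has_integral (L * (p * h) + - L * ((1 - p) * h))) {real j * h .. real j * h + h}"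
    by (rule has_integral_combine[OF _ _ up down]) (use h p in \<open>auto intro: mult_nonneg_nonneg mult_left_le_one_le\<close>)
  then show ?thesis by simp
qed

lemma piece_weak:
  fixes Z :: "real \<Rightarrow> real"
  assumes h: "h > 0" and p: "0 \<le> p" "p < 1"
    and Zi: "Z integrable_on {real j * h .. real j * h + h}"
    and Z0: "\<And>s t. real j * h \<le> s \<Longrightarrow> s \<le> t \<Longrightarrow> t \<le> real j * h + h \<Longrightarrow> integral {s..t} Z = 0"
  shows "((\<lambda>t. phid L h p t * Z t) has_integral 0) {real j * h .. real j * h + h}"
proof -
  let ?c = "real j * h + p * h"
  have c1: "real j * h \<le> ?c" "?c \<le> real j * h + h" using h p by (auto intro: mult_left_le_one_le)
  have up: "((\<lambda>t. phid L h p t * Z t) has_integral 0) {real j * h .. ?c}"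
  proof (rule has_integral_spike_finite[where S="{?c}"])
    have "Z integrable_on {real j * h .. ?c}" using Zi c1 by (auto intro: integrable_subinterval_real)
    moreover have "integral {real j * h .. ?c} Z = 0" using Z0[of "real j * h" ?c] c1 by auto
    ultimately have "(Z has_integral 0) {real j * h .. ?c}" by (metis has_integral_integral)
    then show "((\<lambda>t. L * Z t) has_integral 0) {real j * h .. ?c}"
      using has_integral_mult_right[of Z 0 _ L] by simp
    fix x assume "x \<in> {real j * h .. ?c} - {?c}"
    then show "phid L h p x * Z x = L * Z x" using phid_up[of h p "int j" x] h p
      by auto
  qed auto
  have down: "((\<lambda>t. phid L h p t * Z t) has_integral 0) {?c .. real j * h + h}"
  proof (rule has_integral_spike_finite[where S="{real j * h + h}"])
    have "Z integrable_on {?c .. real j * h + h}" using Zi c1 by (auto intro: integrable_subinterval_real)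
    moreover have "integral {?c .. real j * h + h} Z = 0" using Z0[of ?c "real j * h + h"] c1 by auto
    ultimately have "(Z has_integral 0) {?c .. real j * h + h}" by (metis has_integral_integral)
    then show "((\<lambda>t. - L * Z t) has_integral 0) {?c .. real j * h + h}"
      using has_integral_mult_right[of Z 0 _ "- L"] by simp
    fix x assume "x \<in> {?c .. real j * h + h} - {real j * h + h}"
    then show "phid L h p x * Z x = - L * Z x" using phid_down[of h "int j" p x] h p by auto
  qed auto
  show ?thesis using has_integral_combine[OF c1 up down] by simp
qed

definition phi :: "real \<Rightarrow> real \<Rightarrow> real \<Rightarrow> real \<Rightarrow> real" where
  "phi L h p t = integral {0..t} (phid L h p)"

definition fcon :: "real \<Rightarrow> real \<Rightarrow> real \<Rightarrow> real \<Rightarrow> complex" where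
  "fcon L h p t = exp (\<i> * of_real (phi L h p t))"

definition fdcon :: "real \<Rightarrow> real \<Rightarrow> real \<Rightarrow> real \<Rightarrow> complex" where
  "fdcon L h p t = \<i> * of_real (phid L h p t) * fcon L h p t"

lemma phi_AC: "ACr 0 b (phi L h p) (phid L h p)"
  by (rule ACrI[OF phid_abs]) (simp add: phi_def)

lemma phi_grid:
  assumes h: "h > 0" and p: "0 \<le> p" "p < 1"
  shows "phi L h p (real j * h) = real j * (L * (p * h) - L * ((1 - p) * h))"
proof -
  have "(phid L h p has_integral (real j * (L * (p * h) - L * ((1 - p) * h)))) {0 .. real j * h}"
    by (rule sum_pieces[OF h piece_phid[OF h p]])
  then show ?thesis unfolding phi_def by (rule integral_unique)
qed

lemma phi_close:
  assumes h: "h > 0" and p: "0 \<le> p" "p < 1" and n: "real n * h = 2 * pi"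
    and D: "L * (p * h) - L * ((1 - p) * h) = h * D"
    and t: "t \<in> {0..2*pi}"
  shows "\<bar>phi L h p t - D * t\<bar> \<le> (\<bar>L\<bar> + \<bar>D\<bar>) * h"
proof -
  define j where "j = nat \<lfloor>t / h\<rfloor>"
  have t0: "0 \<le> t / h" using t h by auto
  have jle: "real j * h \<le> t"
  proof -
    have "real j = of_int \<lfloor>t / h\<rfloor>" unfolding j_def using t0 by simp
    also have "\<dots> \<le> t / h" by simp
    finally show ?thesis using h by (simp add: field_simps)
  qed
  have jgt: "t < real j * h + h"
  proof -
    have "t / h < of_int \<lfloor>t / h\<rfloor> + 1" by linarith
    also have "of_int \<lfloor>t / h\<rfloor> = real j" unfolding j_def using t0 by simp
    finally show ?thesis using h by (simp add: field_simps)
  qed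
  have jn: "j \<le> n"
  proof -
    have "t / h \<le> real n" using t n h by (simp add: field_simps)
    then have "\<lfloor>t / h\<rfloor> \<le> int n" by (simp add: floor_le_iff)
    then show ?thesis unfolding j_def by simp
  qed
  have jt: "real j * h \<le> 2 * pi" using jle t by auto
  have "phi L h p t - phi L h p (real j * h) = integral {real j * h .. t} (phid L h p)"
    using ACr_diffI[OF phi_AC[of "2*pi" L h p], of "real j * h" t] jle t h by auto
  moreover have "\<bar>integral {real j * h .. t} (phid L h p)\<bar> \<le> \<bar>L\<bar> * (t - real j * h)"
  proof -
    have "norm (integral {real j * h .. t} (phid L h p)) \<le> integral {real j * h .. t} (\<lambda>_. \<bar>L\<bar>)"
      by (rule integral_norm_bound_integral)
         (auto simp: phid_def intro: integrable_continuous_real continuous_intros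
           absolutely_integrable_on_def[THEN iffD1, OF phid_abs, THEN conjunct1])
    then show ?thesis using jle by (simp add: mult.commute)
  qed
  moreover have "phi L h p (real j * h) = real j * (h * D)"
    using phi_grid[OF h p, of L j] D by simp
  ultimately have "\<bar>phi L h p t - real j * (h * D)\<bar> \<le> \<bar>L\<bar> * (t - real j * h)" by simp
  moreover have "\<bar>D * t - real j * (h * D)\<bar> \<le> \<bar>D\<bar> * h"
  proof -
    have "\<bar>D * t - real j * (h * D)\<bar> = \<bar>D\<bar> * \<bar>t - real j * h\<bar>" by (simp add: algebra_simps abs_mult flip: abs_mult)
    also have "\<dots> \<le> \<bar>D\<bar> * h" using jle jgt by (intro mult_left_mono) auto
    finally show ?thesis .
  qed
  moreover have "\<bar>L\<bar> * (t - real j * h) \<le> \<bar>L\<bar> * h" using jle jgt by (intro mult_left_mono) auto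
  ultimately show ?thesis by (simp add: algebra_simps abs_le_iff) linarith
qed


lemma exp_i_real: "exp (\<i> * of_real x) = of_real (cos x) + \<i> * of_real (sin x)"
  by (subst cis_conv_exp[symmetric]) (simp add: complex_eq_iff)

lemma f_W11:
  fixes d :: int
  assumes h: "h > 0" and p: "0 \<le> p" "p < 1" and n: "real n * h = 2 * pi"
    and D: "L * (p * h) - L * ((1 - p) * h) = h * of_int d"
  shows "W11_circle (fcon L h p) (fdcon L h p)" "circle_deg (fcon L h p) = of_int d"
proof -
  let ?A = "\<lambda>t. - sin (phi L h p t) * phid L h p t"
  let ?B = "\<lambda>t. cos (phi L h p t) * phid L h p t"
  have AC: "ACr 0 (2*pi) (\<lambda>t. cos (phi L h p t)) ?A"
    by (rule ACr_chain[OF phi_AC[of "2*pi" L h p], of cos "\<lambda>x. - sin x"])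
       (auto intro!: derivative_eq_intros continuous_intros)
  have BC: "ACr 0 (2*pi) (\<lambda>t. sin (phi L h p t)) ?B"
    by (rule ACr_chain[OF phi_AC[of "2*pi" L h p], of sin cos])
       (auto intro!: derivative_eq_intros continuous_intros)
  have phi0: "phi L h p 0 = 0" by (simp add: phi_def)
  have fdeq: "fdcon L h p t = of_real (?A t) + \<i> * of_real (?B t)" for t
    by (simp add: fdcon_def fcon_def exp_i_real algebra_simps)
  have fdabs: "fdcon L h p absolutely_integrable_on {0..2*pi}"
  proof -
    have a: "(\<lambda>t. of_real (?A t) :: complex) absolutely_integrable_on {0..2*pi}"
      using absolutely_integrable_linear[OF ACr_abs[OF AC] bounded_linear_of_real] by (simp add: o_def)
    have b: "(\<lambda>t. of_real (?B t) :: complex) absolutely_integrable_on {0..2*pi}"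
      using absolutely_integrable_linear[OF ACr_abs[OF BC] bounded_linear_of_real] by (simp add: o_def)
    have "(\<lambda>t. of_real (?A t) + \<i> * of_real (?B t)) absolutely_integrable_on {0..2*pi}"
      by (intro set_integral_add(1) a set_integrable_mult_right b)
    then show ?thesis unfolding fdeq .
  qed
  have feq: "fcon L h p t = fcon L h p 0 + integral {0..t} (fdcon L h p)" if t: "t \<in> {0..2*pi}" for t
  proof -
    have hA: "(?A has_integral (cos (phi L h p t) - 1)) {0..t}"
      using ACr_has_integral[OF ACr_sub[OF AC, of 0 t]] t phi0 by auto
    have hB: "(?B has_integral (sin (phi L h p t))) {0..t}"
      using ACr_has_integral[OF ACr_sub[OF BC, of 0 t]] t phi0 by auto
    have "((\<lambda>t. of_real (?A t) + \<i> * of_real (?B t)) has_integral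
        (of_real (cos (phi L h p t) - 1) + \<i> * of_real (sin (phi L h p t)))) {0..t}"
      by (intro has_integral_add has_integral_of_real hA has_integral_mult_right hB)
    then have "integral {0..t} (fdcon L h p) = of_real (cos (phi L h p t) - 1) + \<i> * of_real (sin (phi L h p t))"
      unfolding fdeq[abs_def] by (rule integral_unique)
    then show ?thesis by (simp add: fcon_def phi0 exp_i_real)
  qed
  have phi2pi: "phi L h p (2*pi) = 2 * pi * of_int d"
  proof -
    have "phi L h p (real n * h) = real n * (h * of_int d)" using phi_grid[OF h p, of L n] D by simp
    also have "\<dots> = (real n * h) * of_int d" by (simp add: mult.assoc)
    finally show ?thesis unfolding n .
  qed
  have per: "fcon L h p (2*pi) = fcon L h p 0"
  proof -
    have "fcon L h p (2*pi) = exp ((2 * of_int d * pi) * \<i>)"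
      unfolding fcon_def phi2pi by (simp add: algebra_simps)
    also have "\<dots> = 1" by (rule exp_integer_2pi) simp
    finally show ?thesis by (simp add: fcon_def phi0)
  qed
  show "W11_circle (fcon L h p) (fdcon L h p)"
    unfolding W11_circle_def
  proof (intro conjI ballI)
    show "fdcon L h p absolutely_integrable_on {0..2 * pi}" by (rule fdabs)
    show "fcon L h p (2 * pi) = fcon L h p 0" by (rule per)
    fix t assume "t \<in> {0..2*pi}"
    then show "fcon L h p t = fcon L h p 0 + integral {0..t} (fdcon L h p)" by (rule feq)
  next
    fix t show "norm (fcon L h p t) = 1" by (simp add: fcon_def)
  qed
  have "circle_deg (fcon L h p) = of_real ((phi L h p (2*pi) - phi L h p 0) / (2*pi))"
    by (rule deg_lift[OF ACr_cont[OF phi_AC]]) (simp add: fcon_def)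
  then show "circle_deg (fcon L h p) = of_int d" unfolding phi2pi phi0 by simp
qed

lemma pointwise_main:
  fixes f g gd :: complex and \<theta> \<phi>d \<psi>d \<theta>d \<rho> L r d1 :: real and N :: nat
  assumes f1: "norm f = 1" and g1: "norm g = 1"
    and x: "Re (cnj f * g) = cos \<theta>" and y: "Im (cnj f * g) = sin \<theta>"
    and psi: "\<psi>d = Im (cnj g * gd)" and rho: "\<rho> = Re (cnj g * gd)" and th: "\<theta>d = \<psi>d - \<phi>d"
    and L: "\<bar>\<phi>d\<bar> = L" "L > 0" and r: "0 \<le> r" "r \<le> 1" and rL: "(1 - r) * d1 * real N / 2 \<le> r * L"
    and d1: "d1 \<ge> 0"
  shows "(1 - r) * (- (1 - wfn \<theta> ^ Suc N) * \<theta>d) + (1 - r) * BB N \<theta> * (\<phi>d - d1)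
          - ((1 - r) * (wfn \<theta> ^ N / 2) + r * \<phi>d / L) * sin \<theta> * \<rho>
         \<le> norm (\<i> * of_real \<phi>d * f - gd)"
proof -
  define w where "w = wfn \<theta>"
  have w01: "0 \<le> w" "w \<le> 1" unfolding w_def using wfn_bounds by auto
  have wN: "0 \<le> w ^ N" "w ^ N \<le> 1" using w01 by (auto simp: power_le_one)
  define P where "P = 1 - w ^ N / 2"
  define Q where "Q = w ^ N / 2"
  define s where "s = sin \<theta> * \<phi>d / L"
  have s1: "\<bar>s\<bar> \<le> 1"
  proof -
    have "\<bar>s\<bar> = \<bar>sin \<theta>\<bar> * (\<bar>\<phi>d\<bar> / L)" unfolding s_def using L by (simp add: abs_mult)
    also have "\<dots> = \<bar>sin \<theta>\<bar>" using L by simp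
    finally show ?thesis by simp
  qed
  have PT: "(1 - r) * (P * (Re (cnj f * g) * \<phi>d - Im (cnj g * gd)) + Q * (\<phi>d - Im (cnj f * gd))) + r * s * (Im (cnj f * g) * \<phi>d - Re (cnj g * gd))
          \<le> norm (\<i> * of_real \<phi>d * f - gd)"
    by (rule ptwise[OF f1 g1]) (use wN r s1 in \<open>auto simp: P_def Q_def\<close>)
  have IS: "Im (cnj f * gd) = sin \<theta> * \<rho> + cos \<theta> * \<psi>d"
    using Im_split[OF g1, of f gd] x y psi rho by simp
  have cosw: "cos \<theta> = 1 - 2 * w" unfolding w_def wfn_def by (simp add: field_simps)
  have BBw: "BB N \<theta> = - 2 * w + 2 * w * w ^ N" unfolding BB_def w_def by simp
  have phisq: "\<phi>d * \<phi>d = L * L" using L by (metis abs_mult_self_eq)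
  have ssq: "r * s * (sin \<theta> * \<phi>d) = r * L * (sin \<theta>)^2"
  proof -
    have "r * s * (sin \<theta> * \<phi>d) = r * (sin \<theta>)^2 * (\<phi>d * \<phi>d) / L" unfolding s_def by (simp add: power2_eq_square)
    also have "\<dots> = r * L * (sin \<theta>)^2" unfolding phisq using L by (simp add: field_simps)
    finally show ?thesis .
  qed
  have expand: "(1 - r) * (P * (Re (cnj f * g) * \<phi>d - Im (cnj g * gd)) + Q * (\<phi>d - Im (cnj f * gd))) + r * s * (Im (cnj f * g) * \<phi>d - Re (cnj g * gd))
     = ((1 - r) * (- (1 - wfn \<theta> ^ Suc N) * \<theta>d) + (1 - r) * BB N \<theta> * (\<phi>d - d1)
          - ((1 - r) * (wfn \<theta> ^ N / 2) + r * \<phi>d / L) * sin \<theta> * \<rho>)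
       + ((1 - r) * d1 * BB N \<theta> + r * L * (sin \<theta>)^2)"
  proof -
    have "r * s * (Im (cnj f * g) * \<phi>d - Re (cnj g * gd)) = r * L * (sin \<theta>)^2 - r * \<phi>d / L * sin \<theta> * \<rho>"
    proof -
      have "r * s * (sin \<theta> * \<phi>d - \<rho>) = r * s * (sin \<theta> * \<phi>d) - r * s * \<rho>" by (simp add: algebra_simps)
      also have "\<dots> = r * L * (sin \<theta>)^2 - r * \<phi>d / L * sin \<theta> * \<rho>" unfolding ssq by (simp add: s_def)
      finally show ?thesis unfolding y rho[symmetric] .
    qed
    moreover have "(1 - r) * (P * (Re (cnj f * g) * \<phi>d - Im (cnj g * gd)) + Q * (\<phi>d - Im (cnj f * gd)))
       = (1 - r) * (- (1 - w ^ Suc N) * \<theta>d) + (1 - r) * BB N \<theta> * \<phi>d - (1 - r) * (w ^ N / 2) * sin \<theta> * \<rho>"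
      unfolding x IS psi[symmetric] BBw P_def Q_def cosw th by (simp add: field_simps)
    ultimately show ?thesis unfolding w_def by (simp add: algebra_simps)
  qed
  have nonneg: "0 \<le> (1 - r) * d1 * BB N \<theta> + r * L * (sin \<theta>)^2"
  proof -
    have "(1 - r) * d1 * (- BB N \<theta>) \<le> (1 - r) * d1 * (real N * (sin \<theta>)^2 / 2)"
      using BB_lower[of N \<theta>] r d1 by (intro mult_left_mono) auto
    also have "\<dots> = ((1 - r) * d1 * real N / 2) * (sin \<theta>)^2" by simp
    also have "\<dots> \<le> r * L * (sin \<theta>)^2" using rL by (intro mult_right_mono) auto
    finally show ?thesis by simp
  qed
  show ?thesis using PT expand nonneg by linarith
qed

lemma wfn_cont: "continuous_on UNIV wfn"
  unfolding wfn_def[abs_def] by (intro continuous_intros) auto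

lemma ACr_id: "ACr 0 b (\<lambda>t. t) (\<lambda>t. 1)"
  by (rule ACrI) (auto intro: integrable_continuous_real continuous_intros simp: absolutely_integrable_on_def)

lemma L_T1:
  assumes A: "ACr 0 b \<theta> \<theta>'" and b: "0 \<le> b" and per: "\<theta> b = \<theta> 0 + 2 * pi * of_int j"
  shows "((\<lambda>t. (1 - wfn (\<theta> t) ^ M) * \<theta>' t) has_integral ((1 - mm M) * (2 * pi * of_int j))) {0..b}"
proof -
  define G where "G z = (1 - mm M) * z - SS M z" for z
  have GD: "(G has_real_derivative (1 - wfn z ^ M)) (at z)" for z
  proof -
    have "(G has_real_derivative ((1 - mm M) * 1 - (wfn z ^ M - mm M))) (at z)"
      unfolding G_def[abs_def] by (intro DERIV_diff DERIV_cmult SS_deriv DERIV_ident)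
    then show ?thesis by simp
  qed
  have cG: "continuous_on UNIV (\<lambda>z. 1 - wfn z ^ M)"
    by (intro continuous_intros wfn_cont)
  have "ACr 0 b (\<lambda>t. G (\<theta> t)) (\<lambda>t. (1 - wfn (\<theta> t) ^ M) * \<theta>' t)"
    by (rule ACr_chain[OF A GD cG])
  then have "((\<lambda>t. (1 - wfn (\<theta> t) ^ M) * \<theta>' t) has_integral (G (\<theta> b) - G (\<theta> 0))) {0..b}"
    by (rule ACr_has_integral[OF _ b])
  moreover have "G (\<theta> b) - G (\<theta> 0) = (1 - mm M) * (2 * pi * of_int j)"
    unfolding G_def per using SS_periodic[of M "\<theta> 0" j] by (simp add: algebra_simps)
  ultimately show ?thesis by simp
qed

definition BBd :: "nat \<Rightarrow> real \<Rightarrow> real" where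
  "BBd N z = (- 2 + 2 * real (Suc N) * wfn z ^ N) * (sin z / 2)"

lemma L_T3:
  assumes A: "ACr 0 b \<theta> \<theta>'" and W: "ACr 0 b \<omega> \<omega>'" and b: "0 \<le> b"
    and w0: "\<omega> 0 = 0" "\<omega> b = 0" and wa: "\<And>t. t \<in> {0..b} \<Longrightarrow> \<bar>\<omega> t\<bar> \<le> a"
  shows "((\<lambda>t. BB N (\<theta> t) * \<omega>' t) has_integral (- integral {0..b} (\<lambda>t. BBd N (\<theta> t) * \<theta>' t * \<omega> t))) {0..b}"
    "\<bar>integral {0..b} (\<lambda>t. BBd N (\<theta> t) * \<theta>' t * \<omega> t)\<bar> \<le> (real N + 1) * a * integral {0..b} (\<lambda>t. \<bar>\<theta>' t\<bar>)"
proof -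
  have cB: "continuous_on UNIV (BBd N)"
    unfolding BBd_def[abs_def] by (intro continuous_intros wfn_cont) auto
  have U: "ACr 0 b (\<lambda>t. BB N (\<theta> t)) (\<lambda>t. BBd N (\<theta> t) * \<theta>' t)"
    by (rule ACr_chain[OF A _ cB]) (unfold BBd_def, rule BB_deriv)
  have UW: "ACr 0 b (\<lambda>t. BB N (\<theta> t) * \<omega> t) (\<lambda>t. BBd N (\<theta> t) * \<theta>' t * \<omega> t + BB N (\<theta> t) * \<omega>' t)"
    by (rule ACr_mult[OF U W b])
  have h1: "((\<lambda>t. BBd N (\<theta> t) * \<theta>' t * \<omega> t + BB N (\<theta> t) * \<omega>' t) has_integral 0) {0..b}"
    using ACr_has_integral[OF UW b] w0 by simp
  have cth: "continuous_on {0..b} \<theta>" by (rule ACr_cont[OF A])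
  have cw: "continuous_on {0..b} \<omega>" by (rule ACr_cont[OF W])
  have i2abs: "(\<lambda>t. (BBd N (\<theta> t) * \<omega> t) * \<theta>' t) absolutely_integrable_on {0..b}"
    by (rule abs_int_cont_prod[OF _ ACr_abs[OF A]])
       (intro continuous_intros continuous_on_compose2[OF cB cth] cw, auto)
  then have i2: "(\<lambda>t. BBd N (\<theta> t) * \<theta>' t * \<omega> t) integrable_on {0..b}"
    by (simp add: absolutely_integrable_on_def mult_ac)
  have "((\<lambda>t. (BBd N (\<theta> t) * \<theta>' t * \<omega> t + BB N (\<theta> t) * \<omega>' t) - BBd N (\<theta> t) * \<theta>' t * \<omega> t)
      has_integral (0 - integral {0..b} (\<lambda>t. BBd N (\<theta> t) * \<theta>' t * \<omega> t))) {0..b}"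
    by (rule has_integral_diff[OF h1 integrable_integral[OF i2]])
  then show "((\<lambda>t. BB N (\<theta> t) * \<omega>' t) has_integral (- integral {0..b} (\<lambda>t. BBd N (\<theta> t) * \<theta>' t * \<omega> t))) {0..b}"
    by simp
  have ai: "(\<lambda>t. \<bar>\<theta>' t\<bar>) integrable_on {0..b}"
    using ACr_abs[OF A] by (simp add: absolutely_integrable_on_def)
  have "norm (integral {0..b} (\<lambda>t. BBd N (\<theta> t) * \<theta>' t * \<omega> t)) \<le> integral {0..b} (\<lambda>t. (real N + 1) * a * \<bar>\<theta>' t\<bar>)"
  proof (rule integral_norm_bound_integral[OF i2])
    show "(\<lambda>t. (real N + 1) * a * \<bar>\<theta>' t\<bar>) integrable_on {0..b}" by (intro integrable_on_mult_right ai)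
    fix t assume t: "t \<in> {0..b}"
    have "\<bar>BBd N (\<theta> t)\<bar> \<le> real N + 1" unfolding BBd_def by (rule BB_deriv_bound)
    moreover have "\<bar>\<omega> t\<bar> \<le> a" by (rule wa[OF t])
    ultimately have "\<bar>BBd N (\<theta> t)\<bar> * \<bar>\<omega> t\<bar> \<le> (real N + 1) * a"
      by (intro mult_mono) auto
    then have "\<bar>BBd N (\<theta> t)\<bar> * \<bar>\<omega> t\<bar> * \<bar>\<theta>' t\<bar> \<le> (real N + 1) * a * \<bar>\<theta>' t\<bar>"
      by (intro mult_right_mono) auto
    then show "norm (BBd N (\<theta> t) * \<theta>' t * \<omega> t) \<le> (real N + 1) * a * \<bar>\<theta>' t\<bar>"
      by (simp add: abs_mult mult_ac)
  qed
  then show "\<bar>integral {0..b} (\<lambda>t. BBd N (\<theta> t) * \<theta>' t * \<omega> t)\<bar> \<le> (real N + 1) * a * integral {0..b} (\<lambda>t. \<bar>\<theta>' t\<bar>)"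
    by simp
qed

lemma L_T5b:
  assumes h: "h > 0" and p: "0 \<le> p" "p < 1" and n: "real n * h = b"
    and R: "ACr 0 b (\<lambda>t. 0) \<rho>" and cK: "continuous_on {0..b} K"
  shows "((\<lambda>t. phid L h p t * (K t * \<rho> t)) has_integral 0) {0..b}"
proof -
  have b: "0 \<le> b" using n h by (metis mult_nonneg_nonneg of_nat_0_le_iff less_imp_le)
  have Zi: "(\<lambda>t. K t * \<rho> t) integrable_on {0..b}"
    using abs_int_cont_prod[OF cK ACr_abs[OF R]] by (simp add: absolutely_integrable_on_def)
  have "((\<lambda>t. phid L h p t * (K t * \<rho> t)) has_integral (real n * 0)) {0 .. real n * h}"
  proof (rule sum_pieces[OF h])
    fix j assume j: "j < n"
    have sub: "real j * h + h \<le> b"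
    proof -
      have "real j + 1 \<le> real n" using j by simp
      then have "(real j + 1) * h \<le> real n * h" using h by (intro mult_right_mono) auto
      then show ?thesis using n by (simp add: algebra_simps)
    qed
    have j0: "0 \<le> real j * h" using h by simp
    show "((\<lambda>t. phid L h p t * (K t * \<rho> t)) has_integral 0) {real j * h .. real j * h + h}"
    proof (rule piece_weak[OF h p])
      show "(\<lambda>t. K t * \<rho> t) integrable_on {real j * h .. real j * h + h}"
        by (rule integrable_subinterval_real[OF Zi]) (use sub j0 in auto)
      fix s t assume st: "real j * h \<le> s" "s \<le> t" "t \<le> real j * h + h"
      have s0: "0 \<le> s" using j0 st(1) by linarith
      have tb: "t \<le> b" using st(3) sub by linarith
      have "ACr s t (\<lambda>t. 0) \<rho>" using ACr_sub[OF R s0 st(2) tb] .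
      moreover have "continuous_on {s..t} K" by (rule continuous_on_subset[OF cK]) (use s0 tb in auto)
      ultimately show "integral {s..t} (\<lambda>t. K t * \<rho> t) = 0" using weak_zero st by blast
    qed
  qed
  then show ?thesis using n by simp
qed

lemma main_est:
  fixes d1 d2 :: int and N n :: nat and L h p r :: real and g gd :: "real \<Rightarrow> complex"
  assumes h: "h > 0" and p: "0 \<le> p" "p < 1" and n: "real n * h = 2 * pi"
    and D: "L * (p * h) - L * ((1 - p) * h) = h * of_int d1"
    and L: "L > 0" and d1: "d1 \<ge> 0"
    and r: "0 \<le> r" "r \<le> 1" and rL: "(1 - r) * real_of_int d1 * real N / 2 \<le> r * L"
    and W: "W11_circle g gd" and deg: "circle_deg g = of_int d2"
  shows "(1 - r) * (1 - mm (Suc N)) * (2 * pi * real_of_int (d1 - d2))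
          - (real N + 1) * ((L + real_of_int d1) * h) * (integral {0..2*pi} (\<lambda>t. norm (fdcon L h p t - gd t)) + 4 * pi * L)
         \<le> integral {0..2*pi} (\<lambda>t. norm (fdcon L h p t - gd t))"
proof -
  let ?c = "\<lambda>t. norm (fdcon L h p t - gd t)"
  define C where "C = integral {0..2*pi} ?c"
  define a where "a = (L + real_of_int d1) * h"
  have pi0: "0 \<le> 2 * pi" by simp
  have gdi: "gd absolutely_integrable_on {0..2*pi}" and geq: "\<And>t. t \<in> {0..2*pi} \<Longrightarrow> g t = g 0 + integral {0..t} gd"
    and g1: "\<And>t. t \<in> {0..2*pi} \<Longrightarrow> norm (g t) = 1"
    using W unfolding W11_circle_def by blast+
  obtain \<psi> where AC: "ACr 0 (2*pi) \<psi> (\<lambda>t. Im (cnj (g t) * gd t))"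
    and gpsi: "\<And>t. t \<in> {0..2*pi} \<Longrightarrow> g t = exp (\<i> * of_real (\<psi> t))"
    and cpsi: "continuous_on {0..2*pi} \<psi>"
    using lift_W11[OF pi0 gdi geq g1] by blast
  have "of_real ((\<psi> (2*pi) - \<psi> 0) / (2*pi)) = (of_int d2 :: complex)"
    using deg_lift[OF cpsi gpsi] deg by simp
  then have "(\<psi> (2*pi) - \<psi> 0) / (2*pi) = real_of_int d2"
    by (metis of_real_eq_iff of_real_of_int_eq)
  then have psi2: "\<psi> (2*pi) = \<psi> 0 + 2 * pi * real_of_int d2" by (simp add: field_simps)
  have phi0: "phi L h p 0 = 0" by (simp add: phi_def)
  have phi2pi: "phi L h p (2*pi) = 2 * pi * of_int d1"
  proof -
    have "phi L h p (real n * h) = real n * (h * of_int d1)" using phi_grid[OF h p, of L n] D by simp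
    also have "\<dots> = (real n * h) * of_int d1" by (simp add: mult.assoc)
    finally show ?thesis unfolding n .
  qed
  define \<theta> where "\<theta> t = \<psi> t - phi L h p t" for t
  define \<theta>' where "\<theta>' t = Im (cnj (g t) * gd t) - phid L h p t" for t
  have ACth: "ACr 0 (2*pi) \<theta> \<theta>'"
    unfolding \<theta>_def[abs_def] \<theta>'_def[abs_def] by (rule ACr_diff[OF AC phi_AC])
  have thper: "\<theta> (2*pi) = \<theta> 0 + 2 * pi * of_int (d2 - d1)"
    unfolding \<theta>_def psi2 phi2pi phi0 by (simp add: algebra_simps)
  define \<rho> where "\<rho> t = Re (cnj (g t) * gd t)" for t
  have ACrho: "ACr 0 (2*pi) (\<lambda>t. 0) \<rho>" unfolding \<rho>_def[abs_def] by (rule rho_zero[OF pi0 gdi geq g1])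
  have cth: "continuous_on {0..2*pi} \<theta>" by (rule ACr_cont[OF ACth])
  have xy: "Re (cnj (fcon L h p t) * g t) = cos (\<theta> t) \<and> Im (cnj (fcon L h p t) * g t) = sin (\<theta> t)"
    if t: "t \<in> {0..2*pi}" for t
    unfolding fcon_def gpsi[OF t] \<theta>_def exp_i_real by (simp add: cos_diff sin_diff algebra_simps)
  define T where "T t = (1 - r) * (- (1 - wfn (\<theta> t) ^ Suc N) * \<theta>' t) + (1 - r) * BB N (\<theta> t) * (phid L h p t - d1)
          - ((1 - r) * (wfn (\<theta> t) ^ N / 2) + r * phid L h p t / L) * sin (\<theta> t) * \<rho> t" for t
  have Tle: "T t \<le> ?c t" if t: "t \<in> {0..2*pi}" for t
  proof -
    have "T t \<le> norm (\<i> * of_real (phid L h p t) * fcon L h p t - gd t)"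
      unfolding T_def
    proof (rule pointwise_main)
      show "norm (fcon L h p t) = 1" by (simp add: fcon_def)
      show "norm (g t) = 1" by (rule g1[OF t])
      show "Re (cnj (fcon L h p t) * g t) = cos (\<theta> t)" using xy[OF t] by simp
      show "Im (cnj (fcon L h p t) * g t) = sin (\<theta> t)" using xy[OF t] by simp
      show "\<bar>phid L h p t\<bar> = L" using L by (simp add: phid_def)
      show "(1 - r) * real_of_int d1 * real N / 2 \<le> r * L" by (rule rL)
    qed (use L r d1 in \<open>auto simp: \<theta>'_def \<rho>_def\<close>)
    then show ?thesis by (simp add: fdcon_def)
  qed
  have I1: "((\<lambda>t. (1 - wfn (\<theta> t) ^ Suc N) * \<theta>' t) has_integral ((1 - mm (Suc N)) * (2 * pi * of_int (d2 - d1)))) {0..2*pi}"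
    by (rule L_T1[OF ACth pi0 thper])
  define \<omega> where "\<omega> t = phi L h p t - real_of_int d1 * t" for t
  have ACw: "ACr 0 (2*pi) \<omega> (\<lambda>t. phid L h p t - real_of_int d1)"
    using ACr_diff[OF phi_AC ACr_cmult[OF ACr_id, of "2*pi" "real_of_int d1"]]
    unfolding \<omega>_def[abs_def] by simp
  have w0: "\<omega> 0 = 0" "\<omega> (2*pi) = 0" unfolding \<omega>_def using phi0 phi2pi by auto
  have wa: "\<bar>\<omega> t\<bar> \<le> a" if "t \<in> {0..2*pi}" for t
    using phi_close[OF h p n D that] L d1 unfolding \<omega>_def a_def by simp
  define J where "J = integral {0..2*pi} (\<lambda>t. BBd N (\<theta> t) * \<theta>' t * \<omega> t)"
  have I3: "((\<lambda>t. BB N (\<theta> t) * (phid L h p t - real_of_int d1)) has_integral (- J)) {0..2*pi}"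
    and J: "\<bar>J\<bar> \<le> (real N + 1) * a * integral {0..2*pi} (\<lambda>t. \<bar>\<theta>' t\<bar>)"
    using L_T3[OF ACth ACw pi0 w0 wa] unfolding J_def by auto
  have cK1: "continuous_on {0..2*pi} (\<lambda>t. wfn (\<theta> t) ^ N * sin (\<theta> t))"
    by (intro continuous_intros continuous_on_compose2[OF wfn_cont cth] cth) auto
  have I5a: "((\<lambda>t. (wfn (\<theta> t) ^ N * sin (\<theta> t)) * \<rho> t) has_integral 0) {0..2*pi}"
  proof -
    have "(\<lambda>t. (wfn (\<theta> t) ^ N * sin (\<theta> t)) * \<rho> t) integrable_on {0..2*pi}"
      using abs_int_cont_prod[OF cK1 ACr_abs[OF ACrho]] by (simp add: absolutely_integrable_on_def)
    moreover have "integral {0..2*pi} (\<lambda>t. (wfn (\<theta> t) ^ N * sin (\<theta> t)) * \<rho> t) = 0"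
      by (rule weak_zero[OF pi0 ACrho cK1])
    ultimately show ?thesis by (metis has_integral_integral)
  qed
  have I5b: "((\<lambda>t. phid L h p t * (sin (\<theta> t) * \<rho> t)) has_integral 0) {0..2*pi}"
    by (rule L_T5b[OF h p n ACrho]) (intro continuous_intros cth)
  have Teq: "T t = (1 - r) * (- ((1 - wfn (\<theta> t) ^ Suc N) * \<theta>' t)) + (1 - r) * (BB N (\<theta> t) * (phid L h p t - d1))
     - ((1 - r) / 2 * ((wfn (\<theta> t) ^ N * sin (\<theta> t)) * \<rho> t) + r / L * (phid L h p t * (sin (\<theta> t) * \<rho> t)))" for t
    unfolding T_def by (simp add: algebra_simps)
  define V where "V = (1 - r) * (- ((1 - mm (Suc N)) * (2 * pi * of_int (d2 - d1)))) + (1 - r) * (- J) - ((1 - r) / 2 * 0 + r / L * 0)"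
  have IT: "(T has_integral V) {0..2*pi}"
    unfolding Teq[abs_def] V_def
    by (intro has_integral_diff has_integral_add has_integral_mult_right has_integral_neg I1 I3 I5a I5b)
  have cabs: "(\<lambda>t. fdcon L h p t - gd t) absolutely_integrable_on {0..2*pi}"
  proof -
    have "W11_circle (fcon L h p) (fdcon L h p)"
      by (rule f_W11(1)[OF h p n D])
    then have "fdcon L h p absolutely_integrable_on {0..2*pi}" unfolding W11_circle_def by simp
    then show ?thesis by (intro set_integral_diff(1) gdi)
  qed
  then have cI: "?c integrable_on {0..2*pi}" by (simp add: absolutely_integrable_on_def)
  have VC: "V \<le> C" unfolding C_def
    by (rule has_integral_le[OF IT integrable_integral[OF cI]]) (use Tle in auto)
  have thle: "\<bar>\<theta>' t\<bar> \<le> ?c t + 2 * L" if t: "t \<in> {0..2*pi}" for t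
  proof -
    have "Im (cnj (g t) * (fdcon L h p t - gd t)) = Im (cnj (g t) * fdcon L h p t) - Im (cnj (g t) * gd t)"
      by (simp add: algebra_simps)
    moreover have "\<bar>Im (cnj (g t) * (fdcon L h p t - gd t))\<bar> \<le> ?c t"
      using abs_Im_le_cmod[of "cnj (g t) * (fdcon L h p t - gd t)"] g1[OF t] by (simp add: norm_mult)
    moreover have "\<bar>Im (cnj (g t) * fdcon L h p t)\<bar> \<le> L"
    proof -
      have "\<bar>Im (cnj (g t) * fdcon L h p t)\<bar> \<le> norm (cnj (g t) * fdcon L h p t)" by (rule abs_Im_le_cmod)
      also have "\<dots> = L" using g1[OF t] L by (simp add: norm_mult fdcon_def fcon_def phid_def)
      finally show ?thesis .
    qed
    moreover have "\<bar>phid L h p t\<bar> = L" using L by (simp add: phid_def)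
    ultimately show ?thesis unfolding \<theta>'_def by linarith
  qed
  have thI: "(\<lambda>t. \<bar>\<theta>' t\<bar>) integrable_on {0..2*pi}"
    using ACr_abs[OF ACth] by (simp add: absolutely_integrable_on_def)
  have intth: "integral {0..2*pi} (\<lambda>t. \<bar>\<theta>' t\<bar>) \<le> C + 4 * pi * L"
  proof -
    have "integral {0..2*pi} (\<lambda>t. \<bar>\<theta>' t\<bar>) \<le> integral {0..2*pi} (\<lambda>t. ?c t + 2 * L)"
      by (rule integral_le[OF thI]) (use cI thle in \<open>auto intro: integrable_add integrable_continuous_real continuous_intros\<close>)
    also have "\<dots> = C + 4 * pi * L"
      unfolding C_def by (subst integral_add) (use cI in \<open>auto intro: integrable_continuous_real continuous_intros\<close>)
    finally show ?thesis .
  qed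
  have a0: "0 \<le> a" unfolding a_def using L d1 h by simp
  have "(1 - r) * (- J) \<ge> - ((real N + 1) * a * integral {0..2*pi} (\<lambda>t. \<bar>\<theta>' t\<bar>))"
  proof -
    have "(1 - r) * J \<le> (1 - r) * \<bar>J\<bar>" using r by (intro mult_left_mono) auto
    also have "\<dots> \<le> 1 * \<bar>J\<bar>" using r by (intro mult_right_mono) auto
    finally have "(1 - r) * J \<le> 1 * \<bar>J\<bar>" .
    then show ?thesis using J by linarith
  qed
  moreover have "(real N + 1) * a * integral {0..2*pi} (\<lambda>t. \<bar>\<theta>' t\<bar>) \<le> (real N + 1) * a * (C + 4 * pi * L)"
    using intth a0 by (intro mult_left_mono) auto
  moreover have Veq: "V = (1 - r) * (1 - mm (Suc N)) * (2 * pi * real_of_int (d1 - d2)) - (1 - r) * J"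
    unfolding V_def by (simp add: algebra_simps del: mm.simps)
  ultimately have "(1 - r) * (1 - mm (Suc N)) * (2 * pi * real_of_int (d1 - d2)) - (real N + 1) * a * (C + 4 * pi * L) \<le> V"
    by linarith
  then show ?thesis using VC unfolding C_def a_def by linarith
qed

lemma final_arith:
  fixes C k r m e L \<delta> :: real
  assumes est: "(1 - r) * (1 - m) * (2 * pi * k) - e * (C + 4 * pi * L) \<le> C"
    and k: "k \<ge> 1" and r: "0 \<le> r" "r \<le> \<delta> / (8 * pi)" and m: "0 \<le> m" "m \<le> \<delta> / (8 * pi)"
    and e: "0 \<le> e" "e \<le> \<delta> / (8 * pi * L + 4 * pi)" and L: "L > 0" and \<delta>: "\<delta> > 0"
  shows "(2 * pi - \<delta>) * k \<le> C"
proof -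
  have rm: "(1 - r) * (1 - m) \<ge> 1 - \<delta> / (4 * pi)"
  proof -
    have "(1 - r) * (1 - m) = 1 - r - m + r * m" by (simp add: algebra_simps)
    moreover have "r * m \<ge> 0" using r m by simp
    moreover have "r + m \<le> \<delta> / (4 * pi)" using r m by (simp add: field_simps)
    ultimately show ?thesis by linarith
  qed
  have k0: "k > 0" using k by simp
  have A: "(1 - r) * (1 - m) * (2 * pi * k) \<ge> (1 - \<delta> / (4 * pi)) * (2 * pi * k)"
    using rm k0 by (intro mult_right_mono) auto
  have B: "(1 - \<delta> / (4 * pi)) * (2 * pi * k) = 2 * pi * k - \<delta> * k / 2" by (simp add: field_simps)
  have epos: "8 * pi * L + 4 * pi > 0" using L by (simp add: add_pos_pos)
  have e2: "e * (8 * pi * L + 4 * pi) \<le> \<delta>" using e epos by (simp add: field_simps)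
  have "e * (4 * pi * L) + e * (2 * pi) * k \<le> e * (4 * pi * L) * k + e * (2 * pi) * k"
    using e L k by (intro add_right_mono) (auto intro: mult_le_cancel_left1[THEN iffD2])
  also have "\<dots> = (e * (8 * pi * L + 4 * pi)) * k / 2" by (simp add: algebra_simps)
  also have "\<dots> \<le> \<delta> * k / 2" using e2 k0 by (intro divide_right_mono mult_right_mono) auto
  finally have E: "e * (4 * pi * L) + e * (2 * pi) * k \<le> \<delta> * k / 2" .
  have "C * (1 + e) \<ge> 2 * pi * k - \<delta> * k / 2 - e * (4 * pi * L)"
    using est A B by (simp add: algebra_simps)
  also have "2 * pi * k - \<delta> * k / 2 - e * (4 * pi * L) \<ge> (2 * pi - \<delta>) * k * (1 + e)"
  proof -
    have "(2 * pi - \<delta>) * k * (1 + e) = (2 * pi - \<delta>) * k + (2 * pi) * k * e - \<delta> * k * e" by (simp add: algebra_simps)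
    moreover have "\<delta> * k * e \<ge> 0" using \<delta> k0 e by simp
    ultimately show ?thesis using E by (simp add: algebra_simps)
  qed
  finally have "(2 * pi - \<delta>) * k * (1 + e) \<le> C * (1 + e)" .
  then show ?thesis using e by (simp add: mult_le_cancel_right)
qed


lemma frac_aux2: "(Q::real) > 0 \<Longrightarrow> R > 0 \<Longrightarrow> d > 0 \<Longrightarrow> Q / (Q * R / d) = d / R"
  by (simp add: field_simps)

theorem lemma3p1:
  fixes d1 d2 :: int and \<delta> :: real
  assumes "d1 > 0" and "d2 < d1" and "\<delta> > 0"
  shows "\<exists>f fd. W11_circle f fd \<and> circle_deg f = of_int d1 \<and>
           (\<forall>g gd. W11_circle g gd \<and> circle_deg g = of_int d2 \<longrightarrow>
              integral {0..2*pi} (\<lambda>t. norm (fd t - gd t)) \<ge> (2*pi - \<delta>) * real_of_int (d1 - d2))"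
proof -
  have d1pos: "real_of_int d1 > 0" using assms by simp
  define \<delta>' where "\<delta>' = min \<delta> 1"
  have dp: "\<delta>' > 0" "\<delta>' \<le> \<delta>" "\<delta>' \<le> 1" using assms by (auto simp: \<delta>'_def)
  define N :: nat where "N = nat \<lceil>(8 * pi / \<delta>')^2\<rceil>"
  have N: "(8 * pi / \<delta>')^2 \<le> real N" unfolding N_def by linarith
  define L where "L = real_of_int d1 + 1 + 4 * pi * real_of_int d1 * real N / \<delta>'"
  have L0: "4 * pi * real_of_int d1 * real N / \<delta>' \<ge> 0" using d1pos dp by simp
  have L: "L > 0" "L > real_of_int d1" unfolding L_def using d1pos L0 by linarith+
  define r where "r = real_of_int d1 * real N / (2 * L)"
  have r0: "0 \<le> r" unfolding r_def using d1pos L by simp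
  have rle: "r \<le> \<delta>' / (8 * pi)"
  proof -
    have "8 * pi * (real_of_int d1 * real N) = 2 * \<delta>' * (4 * pi * real_of_int d1 * real N / \<delta>')"
      using dp by (simp add: field_simps)
    also have "\<dots> \<le> 2 * \<delta>' * L" unfolding L_def using dp d1pos by (intro mult_left_mono) auto
    finally have "8 * pi * (real_of_int d1 * real N) \<le> \<delta>' * (2 * L)" by simp
    then show ?thesis unfolding r_def using L by (simp add: field_simps)
  qed
  have r1: "r \<le> 1"
  proof -
    have "\<delta>' / (8 * pi) \<le> 1" using dp pi_gt3 by (simp add: field_simps)
    then show ?thesis using rle by linarith
  qed
  have rL: "(1 - r) * real_of_int d1 * real N / 2 \<le> r * L"
  proof -
    have "r * L = real_of_int d1 * real N / 2" unfolding r_def using L by simp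
    moreover have "(1 - r) * (real_of_int d1 * real N) \<le> 1 * (real_of_int d1 * real N)"
      using r0 d1pos by (intro mult_right_mono) auto
    ultimately show ?thesis by simp
  qed
  define X where "X = (real N + 1) * (L + real_of_int d1) * (2 * pi) * (8 * pi * L + 4 * pi) / \<delta>'"
  have X0: "X > 0"
  proof -
    have a1: "real N + 1 > 0" by simp
    have a2: "L + real_of_int d1 > 0" using L d1pos by simp
    have a3: "8 * pi * L + 4 * pi > 0" using L by (simp add: add_pos_pos)
    have "(real N + 1) * (L + real_of_int d1) * (2 * pi) * (8 * pi * L + 4 * pi) > 0"
      using a1 a2 a3 by simp
    then show ?thesis unfolding X_def using dp by simp
  qed
  define n :: nat where "n = nat \<lceil>X\<rceil> + 1"
  have nX: "X \<le> real n" unfolding n_def by linarith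
  have n0: "real n > 0" unfolding n_def by simp
  define h where "h = 2 * pi / real n"
  have h: "h > 0" unfolding h_def using n0 by simp
  have nh: "real n * h = 2 * pi" unfolding h_def using n0 by simp
  define p where "p = (L + real_of_int d1) / (2 * L)"
  have p: "0 \<le> p" "p < 1" unfolding p_def using L d1pos by (auto simp: field_simps)
  have D: "L * (p * h) - L * ((1 - p) * h) = h * of_int d1"
    unfolding p_def using L by (simp add: field_simps)
  have d1nn: "d1 \<ge> 0" using assms by simp
  have fW: "W11_circle (fcon L h p) (fdcon L h p)" and fdeg: "circle_deg (fcon L h p) = of_int d1"
    using f_W11[OF h p nh D] by auto
  define m where "m = mm (Suc N)"
  have m0: "0 \<le> m" unfolding m_def by (rule mm_nonneg)
  have mle: "m \<le> \<delta>' / (8 * pi)"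
  proof -
    have "m^2 \<le> 1 / (2 * real (Suc N) + 1)" unfolding m_def by (rule mm_sq)
    also have "\<dots> \<le> 1 / (8 * pi / \<delta>')^2"
    proof -
      have "(8 * pi / \<delta>')^2 \<le> 2 * real (Suc N) + 1" using N by simp
      moreover have "(8 * pi / \<delta>')^2 > 0" using dp by simp
      ultimately show ?thesis by (intro divide_left_mono) auto
    qed
    also have "\<dots> = (\<delta>' / (8 * pi))^2" by (simp add: power_divide)
    finally have "m^2 \<le> (\<delta>' / (8 * pi))^2" .
    moreover have "0 \<le> \<delta>' / (8 * pi)" using dp by simp
    ultimately show ?thesis by (rule power2_le_imp_le)
  qed
  define e where "e = (real N + 1) * ((L + real_of_int d1) * h)"
  have e0: "0 \<le> e" unfolding e_def using L d1pos h by simp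
  have ele: "e \<le> \<delta>' / (8 * pi * L + 4 * pi)"
  proof -
    have q: "8 * pi * L + 4 * pi > 0" using L by (simp add: add_pos_pos)
    have "e = (real N + 1) * (L + real_of_int d1) * (2 * pi) / real n"
      unfolding e_def h_def by simp
    also have "\<dots> \<le> (real N + 1) * (L + real_of_int d1) * (2 * pi) / X"
      using nX X0 L d1pos by (intro divide_left_mono mult_pos_pos) auto
    also have "\<dots> = \<delta>' / (8 * pi * L + 4 * pi)"
      unfolding X_def using dp q L d1pos by (intro frac_aux2) (auto intro!: mult_pos_pos)
    finally show ?thesis .
  qed
  show ?thesis
  proof (intro exI conjI allI impI)
    show "W11_circle (fcon L h p) (fdcon L h p)" by (rule fW)
    show "circle_deg (fcon L h p) = of_int d1" by (rule fdeg)
    fix g gd assume g: "W11_circle g gd \<and> circle_deg g = of_int d2"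
    define C where "C = integral {0..2*pi} (\<lambda>t. norm (fdcon L h p t - gd t))"
    have est: "(1 - r) * (1 - m) * (2 * pi * real_of_int (d1 - d2)) - e * (C + 4 * pi * L) \<le> C"
      using main_est[OF h p nh D L(1) d1nn r0 r1 rL, of g gd d2] g unfolding C_def m_def e_def by auto
    have k: "real_of_int (d1 - d2) \<ge> 1" using assms by simp
    have "(2 * pi - \<delta>') * real_of_int (d1 - d2) \<le> C"
      by (rule final_arith[OF est k r0 rle m0 mle e0 ele L(1) dp(1)])
    moreover have "(2 * pi - \<delta>) * real_of_int (d1 - d2) \<le> (2 * pi - \<delta>') * real_of_int (d1 - d2)"
      using dp k by (intro mult_right_mono) auto
    ultimately show "(2 * pi - \<delta>) * real_of_int (d1 - d2) \<le> integral {0..2*pi} (\<lambda>t. norm (fdcon L h p t - gd t))"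
      unfolding C_def by linarith
  qed
qed

end
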